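(* Let $p>3$ be a prime and let $x=r/m$, where $0<r<m$ are integers with $m$ prime to $p$. Then $$\sum_{k=1}^{p-1} {(x)_k(1-x)_k\over (1)_k^2}\cdot{1\over k}\equiv Q_p(x) +{1\over 2}p\,Q_p(x)^2\pmod{p^2},$$ $$\sum_{k=1}^{p-1} {(x)_k(1-x)_k\over (1)_k^2}\cdot{1\over k^2}\equiv -{1\over 2}Q_p(x)^2\pmod{p}.$$
   Context: $(y)_n=y(y+1)\cdots(y+n-1)$ denotes the Pochhammer symbol. For an integer $m$ and a rational $a$ whose denominator is prime to $m$, $[a]_m$ denotes the unique representative of $a$ modulo $m$ in $\{0,1,\dots,m-1\}$. The Pochhammer quotient is $$Q_p(x)={1\over p}\left(1-{(x)_p(1-x)_p\over (1)^2_p}\cdot {m^2\over [r/p]_m[-r/p]_m}\right),$$ which is a $p$-integral rational number. Congruences between rational numbers modulo $p^j$ mean that the difference is a rational number whose numerator is divisible by $p^j$ and whose denominator is prime to $p$. *)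

theory Defs
  imports Complex_Main "HOL-Computational_Algebra.Primes"
begin

definition rat_cong :: "int \<Rightarrow> rat \<Rightarrow> rat \<Rightarrow> bool" where
  "rat_cong n a b \<longleftrightarrow>
     (case quotient_of (a - b) of (num, den) \<Rightarrow> n dvd num \<and> coprime den n)"

text \<open>[a]_m: the unique representative of the rational a modulo m in {0,...,m-1}
  (defined when the denominator of a is prime to m).\<close>
definition rat_rep :: "rat \<Rightarrow> int \<Rightarrow> int" where
  "rat_rep a m = (THE k. 0 \<le> k \<and> k < m \<and> rat_cong m a (of_int k))"

definition Qp :: "nat \<Rightarrow> int \<Rightarrow> int \<Rightarrow> rat" where
  "Qp p r m =
     (let x = of_int r / of_int m :: rat in
      (1 / of_nat p) *
        (1 - pochhammer x p * pochhammer (1 - x) p / (pochhammer 1 p)^2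
             * (of_int m)^2
             / (of_int (rat_rep (of_int r / of_nat p) m)
                * of_int (rat_rep (- of_int r / of_nat p) m))))"

end

theory Submission
  imports Defs "HOL-Number_Theory.Number_Theory"
begin


definition Rp :: "nat \<Rightarrow> rat \<Rightarrow> bool" where
  "Rp p q \<longleftrightarrow> (\<exists>a b. \<not> int p dvd b \<and> q = of_int a / of_int b)"

definition Mp :: "nat \<Rightarrow> nat \<Rightarrow> rat \<Rightarrow> bool" where
  "Mp p e q \<longleftrightarrow> (\<exists>c. Rp p c \<and> q = of_nat p ^ e * c)"

definition Up :: "nat \<Rightarrow> rat \<Rightarrow> bool" where
  "Up p q \<longleftrightarrow> (\<exists>a b. \<not> int p dvd a \<and> \<not> int p dvd b \<and> q = of_int a / of_int b)"

context fixes p :: nat assumes pr: "prime p" begin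

lemma prI: "prime (int p)" using pr by simp

lemma ndvd_mult: "\<not> int p dvd a \<Longrightarrow> \<not> int p dvd b \<Longrightarrow> \<not> int p dvd (a*b)"
  using prI by (simp add: prime_dvd_mult_iff)

lemma ndvd_nz: "\<not> int p dvd a \<Longrightarrow> a \<noteq> 0" by auto

lemma Rp_of_int[simp]: "Rp p (of_int a)"
  unfolding Rp_def using pr
  by (intro exI[of _ a] exI[of _ 1]) (auto simp: prime_gt_1_nat)

lemma Rp_of_nat[simp]: "Rp p (of_nat a)"
  using Rp_of_int[of "int a"] by simp

lemma Rp_0[simp]: "Rp p 0" using Rp_of_int[of 0] by simp
lemma Rp_1[simp]: "Rp p 1" using Rp_of_int[of 1] by simp
lemma Rp_numeral[simp]: "Rp p (numeral n)" using Rp_of_int[of "numeral n"] by simp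

lemma Rp_add[intro]: assumes "Rp p x" "Rp p y" shows "Rp p (x + y)"
proof -
  obtain a b c d where x: "\<not> int p dvd b" "x = of_int a / of_int b"
    and y: "\<not> int p dvd d" "y = of_int c / of_int d" using assms unfolding Rp_def by blast
  have "b \<noteq> 0" "d \<noteq> 0" using x y by auto
  hence "x + y = of_int (a*d + c*b) / of_int (b*d)" using x y by (simp add: field_simps)
  thus ?thesis unfolding Rp_def using ndvd_mult[OF x(1) y(1)] by blast
qed

lemma Rp_mult[intro]: assumes "Rp p x" "Rp p y" shows "Rp p (x * y)"
proof -
  obtain a b c d where x: "\<not> int p dvd b" "x = of_int a / of_int b"
    and y: "\<not> int p dvd d" "y = of_int c / of_int d" using assms unfolding Rp_def by blast
  have "x * y = of_int (a*c) / of_int (b*d)" using x y by simp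
  thus ?thesis unfolding Rp_def using ndvd_mult[OF x(1) y(1)] by blast
qed

lemma Rp_uminus[intro]: assumes "Rp p x" shows "Rp p (- x)"
proof -
  have "- x = of_int (-1) * x" by simp
  thus ?thesis using Rp_mult[OF Rp_of_int[of "-1"] assms] by simp
qed

lemma Rp_diff[intro]: "Rp p x \<Longrightarrow> Rp p y \<Longrightarrow> Rp p (x - y)"
  using Rp_add[of x "-y"] Rp_uminus[of y] by simp

lemma Rp_sum[intro]: "(\<And>i. i \<in> A \<Longrightarrow> Rp p (f i)) \<Longrightarrow> Rp p (sum f A)"
  by (induction A rule: infinite_finite_induct) auto

lemma Rp_prod[intro]: "(\<And>i. i \<in> A \<Longrightarrow> Rp p (f i)) \<Longrightarrow> Rp p (prod f A)"
  by (induction A rule: infinite_finite_induct) auto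

lemma Rp_power[intro]: "Rp p x \<Longrightarrow> Rp p (x ^ n)"
  by (induction n) auto

lemma Up_Rp: "Up p x \<Longrightarrow> Rp p x" unfolding Up_def Rp_def by blast

lemma Up_inv: "Up p x \<Longrightarrow> Up p (1 / x)"
proof -
  assume "Up p x"
  then obtain a b where "\<not> int p dvd a" "\<not> int p dvd b" "x = of_int a / of_int b" unfolding Up_def by blast
  thus ?thesis unfolding Up_def by (intro exI[of _ b] exI[of _ a]) simp
qed

lemma Up_inv_Rp[intro]: "Up p x \<Longrightarrow> Rp p (1 / x)" using Up_inv Up_Rp by blast

lemma Up_mult: assumes "Up p x" "Up p y" shows "Up p (x * y)"
proof -
  obtain a b c d where x: "\<not> int p dvd a" "\<not> int p dvd b" "x = of_int a / of_int b"
    and y: "\<not> int p dvd c" "\<not> int p dvd d" "y = of_int c / of_int d" using assms unfolding Up_def by blast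
  have "x * y = of_int (a*c) / of_int (b*d)" using x y by simp
  thus ?thesis unfolding Up_def using ndvd_mult[OF x(1) y(1)] ndvd_mult[OF x(2) y(2)] by blast
qed

lemma Up_of_int: "\<not> int p dvd a \<Longrightarrow> Up p (of_int a)"
  unfolding Up_def using pr
  by (intro exI[of _ a] exI[of _ 1]) (auto simp: prime_gt_1_nat)

lemma Up_1[simp]: "Up p 1"
  using Up_of_int[of 1] prime_gt_1_nat[OF pr] by simp

lemma Up_nz: "Up p x \<Longrightarrow> x \<noteq> 0" unfolding Up_def by auto

lemma Up_prod: "(\<And>i. i \<in> A \<Longrightarrow> Up p (f i)) \<Longrightarrow> Up p (prod f A)"
proof (induction A rule: infinite_finite_induct)
  case (infinite A) then show ?case by simp
next
  case empty then show ?case by simp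
next
  case (insert x F) then show ?case by (simp add: Up_mult)
qed

lemma Up_power: "Up p x \<Longrightarrow> Up p (x ^ n)"
  using Up_prod[of "{..<n}" "\<lambda>_. x"] by simp

lemma Mp_Rp: assumes "Mp p e x" shows "Rp p x"
proof -
  obtain c where "Rp p c" "x = of_nat p ^ e * c" using assms unfolding Mp_def by blast
  thus ?thesis using Rp_mult[OF Rp_power[OF Rp_of_nat[of p]], of c e] by simp
qed

lemma Mp_0_iff: "Mp p 0 x \<longleftrightarrow> Rp p x" unfolding Mp_def by simp

lemma Mp_zero[simp]: "Mp p e 0" unfolding Mp_def by (intro exI[of _ 0]) simp

lemma Mp_add[intro]: assumes "Mp p e x" "Mp p e y" shows "Mp p e (x + y)"
proof -
  obtain c d where "Rp p c" "x = of_nat p ^ e * c" "Rp p d" "y = of_nat p ^ e * d"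
    using assms unfolding Mp_def by blast
  thus ?thesis unfolding Mp_def by (intro exI[of _ "c+d"]) (simp add: distrib_left Rp_add)
qed

lemma Mp_uminus[intro]: assumes "Mp p e x" shows "Mp p e (- x)"
proof -
  obtain c where "Rp p c" "x = of_nat p ^ e * c" 
    using assms unfolding Mp_def by blast
  thus ?thesis unfolding Mp_def by (intro exI[of _ "-c"]) (simp add: Rp_uminus)
qed

lemma Mp_diff[intro]: "Mp p e x \<Longrightarrow> Mp p e y \<Longrightarrow> Mp p e (x - y)"
  using Mp_add[of e x "-y"] Mp_uminus[of e y] by simp

lemma Mp_sum[intro]: "(\<And>i. i \<in> A \<Longrightarrow> Mp p e (f i)) \<Longrightarrow> Mp p e (sum f A)"
  by (induction A rule: infinite_finite_induct) auto

lemma Mp_mult[intro]: assumes "Mp p e x" "Mp p f y" shows "Mp p (e + f) (x * y)"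
proof -
  obtain c d where "Rp p c" "x = of_nat p ^ e * c" "Rp p d" "y = of_nat p ^ f * d"
    using assms unfolding Mp_def by blast
  thus ?thesis unfolding Mp_def by (intro exI[of _ "c*d"]) (simp add: power_add Rp_mult mult_ac)
qed

lemma Mp_mult_R: "Mp p e x \<Longrightarrow> Rp p y \<Longrightarrow> Mp p e (x * y)"
  using Mp_mult[of e x 0 y] by (simp add: Mp_0_iff)

lemma Mp_mult_L: "Rp p y \<Longrightarrow> Mp p e x \<Longrightarrow> Mp p e (y * x)"
  using Mp_mult_R[of e x y] by (simp add: mult.commute)

lemma Mp_mono: assumes "e \<le> f" "Mp p f x" shows "Mp p e x"
proof -
  obtain c where c: "Rp p c" "x = of_nat p ^ f * c" using assms unfolding Mp_def by auto
  obtain k where k: "f = e + k" using assms(1) le_Suc_ex by blast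
  have "x = of_nat p ^ (e + k) * c" using c k by simp
  also have "\<dots> = of_nat p ^ e * (of_nat p ^ k * c)" by (simp add: power_add)
  finally have "x = of_nat p ^ e * (of_nat p ^ k * c)" .
  moreover have "Rp p (of_nat p ^ k * c)" using Rp_mult[OF Rp_power[OF Rp_of_nat] c(1)] by blast
  ultimately show ?thesis unfolding Mp_def by blast
qed

lemma Mp_pow: "Mp p e (of_nat p ^ e)" unfolding Mp_def by (intro exI[of _ 1]) simp

lemma Mp_p: "Mp p 1 (of_nat p)" using Mp_pow[of 1] by simp

lemma Mp_divp: assumes "Mp p (Suc e) x" shows "Mp p e (x / of_nat p)"
proof -
  obtain c where c: "Rp p c" "x = of_nat p ^ Suc e * c" using assms unfolding Mp_def by auto
  have "p \<noteq> 0" using pr by auto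
  hence "x / of_nat p = of_nat p ^ e * c" using c by simp
  thus ?thesis unfolding Mp_def using c by auto
qed

lemma Mp_multp: assumes "Mp p e x" shows "Mp p (Suc e) (of_nat p * x)"
  using Mp_mult[OF Mp_p assms] by simp

lemma Mp_div_unit: assumes "Mp p e (x * y)" "Up p y" shows "Mp p e x"
proof -
  have "x = (x * y) * (1 / y)" using Up_nz[OF assms(2)] by simp
  thus ?thesis using Mp_mult_R[OF assms(1) Up_inv_Rp[OF assms(2)]] by simp
qed

lemma Mp_int_iff: "Mp p 1 (of_int a) \<longleftrightarrow> int p dvd a"
proof
  assume "int p dvd a"
  then obtain k where "a = int p * k" by auto
  thus "Mp p 1 (of_int a)" unfolding Mp_def by (intro exI[of _ "of_int k"]) simp
next
  assume "Mp p 1 (of_int a)"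
  then obtain c where c: "Rp p c" "of_int a = of_nat p * c" unfolding Mp_def by auto
  then obtain u v where uv: "\<not> int p dvd v" "c = of_int u / of_int v" unfolding Rp_def by auto
  have "v \<noteq> 0" using uv by auto
  hence "of_int (a * v) = (of_int (int p * u) :: rat)" using c uv by (simp add: field_simps)
  hence "a * v = int p * u" by (simp only: of_int_eq_iff)
  hence "int p dvd a * v" by simp
  thus "int p dvd a" using uv prI by (simp add: prime_dvd_mult_iff)
qed

lemma Up_of_Rp: assumes "Rp p x" "\<not> Mp p 1 x" shows "Up p x"
proof -
  obtain a b where ab: "\<not> int p dvd b" "x = of_int a / of_int b" using assms unfolding Rp_def by auto
  have "\<not> int p dvd a"
  proof
    assume "int p dvd a"
    hence "Mp p 1 (of_int a)" using Mp_int_iff by auto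
    hence "Mp p 1 (of_int a * (1 / of_int b))" 
      using Mp_mult_R[of 1 "of_int a" "1/of_int b"] Up_inv_Rp Up_of_int ab(1) by auto
    thus False using assms ab by simp
  qed
  thus ?thesis unfolding Up_def using ab by auto
qed

lemma Up_not_Mp: assumes "Up p x" shows "\<not> Mp p 1 x"
proof
  assume "Mp p 1 x"
  obtain a b where ab: "\<not> int p dvd a" "\<not> int p dvd b" "x = of_int a / of_int b" using assms unfolding Up_def by auto
  have "of_int a = x * of_int b" using ab by (auto simp: ndvd_nz)
  hence "Mp p 1 (of_int a)" using Mp_mult_R[OF \<open>Mp p 1 x\<close>, of "of_int b"] by simp
  thus False using ab Mp_int_iff by simp
qed

lemma Up_add_Mp: assumes "Up p x" "Mp p 1 y" shows "Up p (x + y)"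
proof (rule Up_of_Rp)
  show "Rp p (x + y)" using Rp_add[OF Up_Rp[OF assms(1)] Mp_Rp[OF assms(2)]] .
  show "\<not> Mp p 1 (x + y)"
  proof
    assume "Mp p 1 (x+y)" hence "Mp p 1 (x + y - y)" using assms Mp_diff by blast
    thus False using Up_not_Mp[OF assms(1)] by simp
  qed
qed

end

lemma Up_nat: "prime p \<Longrightarrow> 0 < n \<Longrightarrow> n < p \<Longrightarrow> Up p (of_nat n)"
  using Up_of_int[of p "int n"] by (simp add: zdvd_imp_le) (meson nat_dvd_not_less of_nat_dvd_iff)



lemma rat_cong_intro:
  assumes "den \<noteq> 0" "coprime den n" "n dvd num" "a - b = of_int num / of_int den"
  shows "rat_cong n a b"
proof -
  obtain n0 d0 where q: "quotient_of (a - b) = (n0, d0)" by (cases "quotient_of (a - b)") auto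
  have d0: "d0 > 0" using quotient_of_denom_pos[OF q] .
  have cp: "coprime n0 d0" using quotient_of_coprime[OF q] .
  have "of_int n0 / of_int d0 = (of_int num / of_int den :: rat)" using quotient_of_div[OF q] assms(4) by simp
  hence "of_int (n0 * den) = (of_int (num * d0) :: rat)" using d0 assms(1) by (simp add: field_simps)
  hence eq: "n0 * den = num * d0" by (simp only: of_int_eq_iff)
  have "n dvd n0 * den" unfolding eq using assms(3) by simp
  hence "n dvd n0" using assms(2) by (simp add: coprime_dvd_mult_left_iff coprime_commute)
  moreover have "coprime d0 n" using coprime_divisors[OF dvd_refl \<open>n dvd n0\<close>, of d0] cp
    by (simp add: coprime_commute)
  ultimately show ?thesis unfolding rat_cong_def q by simp
qed

lemma rat_cong_elim:
  assumes "rat_cong n a b"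
  obtains num den where "den > 0" "coprime den n" "n dvd num" "a - b = of_int num / of_int den"
proof -
  obtain n0 d0 where q: "quotient_of (a - b) = (n0, d0)" by (cases "quotient_of (a - b)") auto
  show ?thesis using that[of d0 n0] assms quotient_of_denom_pos[OF q] quotient_of_div[OF q]
    unfolding rat_cong_def q by simp
qed

lemma rat_cong_from_Mp:
  assumes pr: "prime p" and "Mp p e (a - b)"
  shows "rat_cong (int p ^ e) a b"
proof -
  obtain c where c: "Rp p c" "a - b = of_nat p ^ e * c" using assms unfolding Mp_def by auto
  obtain u v where uv: "\<not> int p dvd v" "c = of_int u / of_int v" using c unfolding Rp_def by auto
  show ?thesis
  proof (rule rat_cong_intro[of v _ "int p ^ e * u"])
    show "v \<noteq> 0" using uv by auto
    show "coprime v (int p ^ e)" using prime_imp_power_coprime_int[of "int p" v e] pr uv by simp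
    show "int p ^ e dvd int p ^ e * u" by simp
    show "a - b = of_int (int p ^ e * u) / of_int v" using c uv by simp
  qed
qed

lemma rat_rep_eq:
  assumes "m > 0" "0 \<le> k" "k < m" "rat_cong m a (of_int k)"
  shows "rat_rep a m = k"
  unfolding rat_rep_def
proof (rule the_equality)
  show "0 \<le> k \<and> k < m \<and> rat_cong m a (rat_of_int k)" using assms by simp
  fix k' assume k': "0 \<le> k' \<and> k' < m \<and> rat_cong m a (rat_of_int k')"
  obtain n1 d1 where 1: "d1 > 0" "coprime d1 m" "m dvd n1" "a - of_int k = of_int n1 / of_int d1"
    using rat_cong_elim[OF assms(4)] by blast
  obtain n2 d2 where 2: "d2 > 0" "coprime d2 m" "m dvd n2" "a - of_int k' = of_int n2 / of_int d2"
    using rat_cong_elim[of m a "of_int k'"] k' by blast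
  have "of_int (k - k') = (of_int n2 / of_int d2 - of_int n1 / of_int d1 :: rat)" using 1 2 by simp
  hence "of_int ((k - k') * (d1 * d2)) = (of_int (n2 * d1 - n1 * d2) :: rat)" using 1 2
    by (simp add: field_simps)
  hence eq: "(k - k') * (d1 * d2) = n2 * d1 - n1 * d2" by (simp only: of_int_eq_iff)
  have "m dvd (k - k') * (d1 * d2)" unfolding eq using 1 2 by simp
  moreover have "coprime (d1 * d2) m" using 1 2 by simp
  ultimately have "m dvd k - k'" by (simp add: coprime_dvd_mult_left_iff coprime_commute)
  then obtain q where q: "k - k' = m * q" by auto
  have "q = 0"
  proof (rule ccontr)
    assume "q \<noteq> 0"
    hence "\<bar>m * q\<bar> \<ge> m" using assms(1) by (simp add: abs_mult mult_le_cancel_left1)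
    thus False using q k' assms by linarith
  qed
  thus "k' = k" using q by simp
qed



definition ff :: "nat \<Rightarrow> nat \<Rightarrow> rat" where
  "ff i k = (\<Prod>j<k. (of_nat j - of_nat i) * (of_nat j + of_nat i + 1) / (of_nat j + 1)^2)"

definition H :: "nat \<Rightarrow> rat" where "H n = (\<Sum>i=1..n. 1 / of_nat i)"

lemma H_0[simp]: "H 0 = 0" by (simp add: H_def)
lemma H_Suc: "H (Suc n) = H n + 1 / (of_nat n + 1)" by (simp add: H_def)

lemma ff_0[simp]: "ff i 0 = 1" by (simp add: ff_def)

lemma ff_Suc: "ff i (Suc k) = ff i k * ((of_nat k - of_nat i) * (of_nat k + of_nat i + 1) / (of_nat k + 1)^2)"
  by (simp add: ff_def)

lemma ff_zero: "i < k \<Longrightarrow> ff i k = 0"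
  unfolding ff_def by (intro prod_zero) (auto intro!: bexI[of _ i])

lemma ff_rel: "ff (Suc i) k * (of_nat (Suc i) - of_nat k) = ff i k * (of_nat (Suc i) + of_nat k)"
proof (induction k)
  case 0 then show ?case by simp
next
  case (Suc k)
  define A where "A = ff (Suc i) k"
  define B where "B = ff i k"
  have IH: "A * (of_nat i + 1 - of_nat k) = B * (of_nat i + 1 + of_nat k)" using Suc unfolding A_def B_def by (simp add: ac_simps)
  have "ff (Suc i) (Suc k) * (of_nat (Suc i) - of_nat (Suc k)) = 
     - (A * (of_nat i + 1 - of_nat k)) * (of_nat k + of_nat i + 2) * (of_nat i - of_nat k) / (of_nat k + 1)^2"
    unfolding ff_Suc A_def[symmetric] by (simp add: algebra_simps)
  also have "\<dots> = - (B * (of_nat i + 1 + of_nat k)) * (of_nat k + of_nat i + 2) * (of_nat i - of_nat k) / (of_nat k + 1)^2"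
    using IH by simp
  also have "\<dots> = ff i (Suc k) * (of_nat (Suc i) + of_nat (Suc k))"
    unfolding ff_Suc B_def[symmetric] by (simp add: algebra_simps)
  finally show ?case .
qed

lemma tele_alg: "(n::rat) \<noteq> 0 \<Longrightarrow> K + 1 \<noteq> 0 \<Longrightarrow> n + K + 1 \<noteq> 0 \<Longrightarrow>
  B * (n - K) / n^2 + B * ((K - n) * (K + n + 1) / (K + 1)^2) / (n + K + 1) =
  B * ((K - n) * (K + n + 1) / (K + 1)^2) * (n - (K + 1)) / n^2"
proof -
  assume a: "(n::rat) \<noteq> 0" "K + 1 \<noteq> 0" "n + K + 1 \<noteq> 0"
  have e: "(K - n) * (K + n + 1) / (K + 1)^2 / (n + K + 1) = (K - n) / (K+1)^2"
    using a by (simp add: add.commute add.left_commute)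
  have "B * (n - K) / n^2 + B * ((K - n) * (K + n + 1) / (K + 1)^2) / (n + K + 1) =
     B * (n - K) / n^2 + B * ((K - n) / (K+1)^2)" by (metis e times_divide_eq_right)
  also have "\<dots> = B * ((K - n) * (K + n + 1) / (K + 1)^2) * (n - (K + 1)) / n^2"
    using a by (simp add: field_simps) (simp add: algebra_simps power2_eq_square)
  finally show ?thesis .
qed

lemma pos1: "(of_nat n + 1 :: rat) \<noteq> 0"
proof -
  have "(0::rat) \<le> of_nat n" by simp
  thus ?thesis by linarith
qed

lemma A1: "(k::rat) \<noteq> 0 \<Longrightarrow> n \<noteq> 0 \<Longrightarrow> n + k \<noteq> 0 \<Longrightarrow> (2*k*F/(n+k))/k^2 = (2/n)*(F/k - F/(n+k))"
  by (simp add: divide_simps) (simp add: algebra_simps power2_eq_square)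
lemma A2: "(a::rat) \<noteq> 0 \<Longrightarrow> D - (-2*h^2) = (2/a)*(-2*(h + 1/a) + 1/a) \<Longrightarrow> D = -2*(h+1/a)^2"
  by (simp add: divide_simps) (simp add: algebra_simps power2_eq_square)

lemma ff_tele:
  assumes "n > 0"
  shows "(\<Sum>k\<le>K. ff n k / (of_nat n + of_nat k)) = ff n K * (of_nat n - of_nat K) / (of_nat n)^2"
proof (induction K)
  case 0 then show ?case using assms by (simp add: power2_eq_square)
next
  case (Suc K)
  define B where "B = ff n K"
  have n0: "(of_nat n :: rat) \<noteq> 0" using assms by simp
  have n1: "(of_nat n + of_nat K + 1 :: rat) \<noteq> 0" using pos1[of "n+K"] by simp
  have k1: "(of_nat K + 1 :: rat) \<noteq> 0" using pos1 .
  have "(\<Sum>k\<le>Suc K. ff n k / (of_nat n + of_nat k)) = 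
     B * (of_nat n - of_nat K) / (of_nat n)^2 + B * ((of_nat K - of_nat n) * (of_nat K + of_nat n + 1) / (of_nat K + 1)^2) / (of_nat n + of_nat K + 1)"
    using Suc unfolding B_def by (simp add: ff_Suc)
  also have "\<dots> = B * ((of_nat K - of_nat n) * (of_nat K + of_nat n + 1) / (of_nat K + 1)^2) * (of_nat n - of_nat (Suc K)) / (of_nat n)^2"
    using tele_alg[OF n0 k1 n1, of B] by simp
  also have "\<dots> = ff n (Suc K) * (of_nat n - of_nat (Suc K)) / (of_nat n)^2"
    unfolding ff_Suc B_def by simp
  finally show ?case .
qed

lemma ff_zero_sum: "n > 0 \<Longrightarrow> (\<Sum>k\<le>n. ff n k / (of_nat n + of_nat k)) = 0"
  using ff_tele[of n n] by simp

lemma sum_atMost_split0: "sum f {..n} = f 0 + sum f {1..(n::nat)}"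
  by (simp add: atMost_atLeast0 sum.atLeast_Suc_atMost)

lemma ff_zero_sum1: "n > 0 \<Longrightarrow> (\<Sum>k=1..n. ff n k / (of_nat n + of_nat k)) = - 1 / of_nat n"
  using ff_zero_sum[of n] unfolding sum_atMost_split0 by (simp add: field_simps)

definition cs :: "nat \<Rightarrow> rat" where "cs n = (\<Sum>k=1..n. ff n k / of_nat k)"
definition ds :: "nat \<Rightarrow> rat" where "ds n = (\<Sum>k=1..n. ff n k / (of_nat k)^2)"

lemma ff_diff:
  assumes "k \<ge> 1" "k \<le> Suc i"
  shows "ff (Suc i) k - ff i k = 2 * of_nat k * ff (Suc i) k / (of_nat (Suc i) + of_nat k)"
proof -
  have nz: "(of_nat (Suc i) + of_nat k :: rat) \<noteq> 0" using pos1[of "i+k"] by (simp add: ac_simps)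
  have "ff i k = ff (Suc i) k * (of_nat (Suc i) - of_nat k) / (of_nat (Suc i) + of_nat k)"
    using ff_rel[of i k] nz by (simp add: field_simps)
  thus ?thesis using nz by (simp add: field_simps)
qed

lemma cs_Suc_diff: "cs (Suc i) - cs i = - 2 / (of_nat i + 1)"
proof -
  have "cs i = (\<Sum>k=1..Suc i. ff i k / of_nat k)" unfolding cs_def by (simp add: ff_zero)
  hence "cs (Suc i) - cs i = (\<Sum>k=1..Suc i. (ff (Suc i) k - ff i k) / of_nat k)"
    unfolding cs_def by (simp add: sum_subtractf diff_divide_distrib)
  also have "\<dots> = (\<Sum>k=1..Suc i. 2 * (ff (Suc i) k / (of_nat (Suc i) + of_nat k)))"
    by (rule sum.cong) (auto simp: ff_diff)
  also have "\<dots> = - 2 / (of_nat i + 1)"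
    unfolding sum_distrib_left[symmetric] using ff_zero_sum1[of "Suc i"] by simp
  finally show ?thesis .
qed

lemma cs_eq: "cs n = - 2 * H n"
proof (induction n)
  case 0 then show ?case by (simp add: cs_def)
next
  case (Suc n) then show ?case using cs_Suc_diff[of n] by (simp add: H_Suc algebra_simps)
qed

lemma ds_Suc_diff: "ds (Suc i) - ds i = (2 / (of_nat i + 1)) * (- 2 * H (Suc i) + 1 / (of_nat i + 1))"
proof -
  define n where "n = Suc i"
  have nn: "(of_nat n :: rat) = of_nat i + 1" unfolding n_def by simp
  have "ds i = (\<Sum>k=1..Suc i. ff i k / (of_nat k)^2)" unfolding ds_def by (simp add: ff_zero)
  hence "ds (Suc i) - ds i = (\<Sum>k=1..Suc i. (ff (Suc i) k - ff i k) / (of_nat k)^2)"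
    unfolding ds_def by (simp add: sum_subtractf diff_divide_distrib)
  also have "\<dots> = (\<Sum>k=1..n. (2 / of_nat n) * (ff n k / of_nat k - ff n k / (of_nat n + of_nat k)))"
  proof (rule sum.cong)
    fix k assume k: "k \<in> {1..n}"
    have nz: "(of_nat n + of_nat k :: rat) \<noteq> 0" "(of_nat n :: rat) \<noteq> 0" "(of_nat k :: rat) \<noteq> 0"
      using k unfolding n_def by auto
    have fd: "ff (Suc i) k - ff i k = 2 * of_nat k * ff n k / (of_nat n + of_nat k)"
      using ff_diff[of k i] k unfolding n_def by simp
    show "(ff (Suc i) k - ff i k) / (of_nat k)^2 = (2 / of_nat n) * (ff n k / of_nat k - ff n k / (of_nat n + of_nat k))"
      unfolding fd using A1[OF nz(3) nz(2) nz(1)] by simp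
  qed (simp add: n_def)
  also have "\<dots> = (2 / of_nat n) * (cs n - (\<Sum>k=1..n. ff n k / (of_nat n + of_nat k)))"
    unfolding cs_def sum_distrib_left[symmetric] by (simp add: sum_subtractf)
  also have "\<dots> = (2 / (of_nat i + 1)) * (- 2 * H (Suc i) + 1 / (of_nat i + 1))"
    using ff_zero_sum1[of n] cs_eq[of n] unfolding nn by (simp add: n_def)
  finally show ?thesis .
qed

lemma ds_eq: "ds n = - 2 * (H n)^2"
proof (induction n)
  case 0 then show ?case by (simp add: ds_def)
next
  case (Suc n)
  have nz: "(of_nat n + 1 :: rat) \<noteq> 0" using pos1 .
  show ?case using A2[OF nz, of "ds (Suc n)" "H n"] ds_Suc_diff[of n] Suc
    by (simp add: H_Suc)
qed



definition X :: "nat \<Rightarrow> nat \<Rightarrow> rat" where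
  "X p k = (\<Sum>c\<in>{1..int p - 1}. 1 / (of_int c)^k)"

context fixes p :: nat assumes pr: "prime p" begin

lemma inv_pow_cong:
  assumes "\<not> int p dvd a" "\<not> int p dvd b" "int p dvd a - b"
  shows "Mp p 1 (1 / (of_int a)^k - 1 / (of_int b)^k)"
proof -
  have a0: "a \<noteq> 0" "b \<noteq> 0" using assms by auto
  have "[a = b] (mod int p)" using assms(3) by (simp add: cong_iff_dvd_diff)
  hence "[b ^ k = a ^ k] (mod int p)" using cong_pow cong_sym by blast
  hence d: "int p dvd b ^ k - a ^ k" by (simp add: cong_iff_dvd_diff)
  have e: "1 / (of_int a)^k - 1 / (of_int b)^k = of_int (b ^ k - a ^ k) * (1 / (of_int (a ^ k * b ^ k)) :: rat)"
    using a0 by (simp add: field_simps)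
  have m: "Mp p 1 (of_int (b ^ k - a ^ k))" by (subst Mp_int_iff[OF pr]) (rule d)
  have "\<not> int p dvd a ^ k" "\<not> int p dvd b ^ k" using prime_dvd_power[OF prI[OF pr]] assms(1,2) by blast+
  hence "Up p (of_int (a ^ k * b ^ k))" using Up_of_int[OF pr] ndvd_mult[OF pr] by blast
  hence "Rp p (1 / (of_int (a ^ k * b ^ k)))" using Up_inv_Rp[OF pr] by blast
  from Mp_mult_R[OF pr m this] show ?thesis unfolding e .
qed

lemma resid_sum:
  assumes fin: "finite J" and inj: "inj_on (\<lambda>j. f j mod int p) J"
    and nd: "\<forall>j\<in>J. \<not> int p dvd f j" and card: "card J = p - 1"
  shows "Mp p 1 ((\<Sum>j\<in>J. 1 / (of_int (f j))^k) - X p k)"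
proof -
  have p1: "p > 1" using pr prime_gt_1_nat by blast
  have sub: "(\<lambda>j. f j mod int p) ` J \<subseteq> {1..int p - 1}"
  proof
    fix c assume "c \<in> (\<lambda>j. f j mod int p) ` J"
    then obtain j where j: "j \<in> J" "c = f j mod int p" by auto
    have "c \<noteq> 0" using nd j by (auto simp: dvd_eq_mod_eq_0)
    moreover have "0 \<le> c" "c < int p" using j p1 by auto
    ultimately show "c \<in> {1..int p - 1}" by auto
  qed
  have cardI: "card {1..int p - 1} = p - 1" by simp
  have img: "(\<lambda>j. f j mod int p) ` J = {1..int p - 1}"
    by (rule card_subset_eq) (use sub card card_image[OF inj] cardI in auto)
  have "(\<Sum>j\<in>J. 1 / (of_int (f j mod int p))^k) = X p k"
    unfolding X_def img[symmetric] sum.reindex[OF inj] by simp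
  moreover have "Mp p 1 ((\<Sum>j\<in>J. 1 / (of_int (f j))^k) - (\<Sum>j\<in>J. 1 / (of_int (f j mod int p))^k))"
    unfolding sum_subtractf[symmetric]
  proof (rule Mp_sum[OF pr])
    fix j assume j: "j \<in> J"
    have "\<not> int p dvd f j mod int p" using nd j by (simp add: dvd_eq_mod_eq_0)
    moreover have "int p dvd f j - f j mod int p" by (simp add: mod_div_mult_eq minus_mod_eq_mult_div)
    ultimately show "Mp p 1 (1 / (of_int (f j))^k - 1 / (of_int (f j mod int p))^k)"
      using inv_pow_cong nd j by blast
  qed
  ultimately show ?thesis by simp
qed

lemma X_Mp:
  assumes "\<not> int p dvd (2 ^ k - 1)" "p > 2"
  shows "Mp p 1 (X p k)"
proof -
  have p1: "p > 1" using pr prime_gt_1_nat by blast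
  have p2: "p \<noteq> 2" using assms by (auto)

  have oddp: "\<not> int p dvd 2" 
  proof
    assume "int p dvd 2" hence "p dvd 2" by presburger
    hence "p \<le> 2" by (simp add: dvd_imp_le)
    thus False using p1 p2 by auto
  qed
  have inj: "inj_on (\<lambda>c. 2 * c mod int p) {1..int p - 1}"
  proof (rule inj_onI)
    fix a b assume a: "a \<in> {1..int p - 1}" and b: "b \<in> {1..int p - 1}" and e: "2 * a mod int p = 2 * b mod int p"
    hence d2: "int p dvd 2 * (a - b)" by (metis mod_eq_dvd_iff right_diff_distrib)
    have "int p dvd a - b" using prime_dvd_multD[OF prI[OF pr] d2] oddp by blast
    then obtain q where q: "a - b = int p * q" by auto
    have "q = 0"
    proof (rule ccontr)
      assume "q \<noteq> 0"
      hence "1 \<le> \<bar>q\<bar>" by linarith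
      hence "int p * 1 \<le> int p * \<bar>q\<bar>" by (intro mult_left_mono) auto
      hence "\<bar>int p * q\<bar> \<ge> int p" by (simp add: abs_mult)
      thus False using q a b by auto
    qed
    thus "a = b" using q by simp
  qed
  have nd: "\<forall>c\<in>{1..int p - 1}. \<not> int p dvd 2 * c"
  proof
    fix c assume c: "c \<in> {1..int p - 1}"
    have "\<not> int p dvd c" using c zdvd_imp_le by fastforce
    thus "\<not> int p dvd 2 * c" using oddp prI[OF pr] by (simp add: prime_dvd_mult_iff)
  qed
  have m: "Mp p 1 ((\<Sum>c\<in>{1..int p - 1}. 1 / (of_int (2 * c))^k) - X p k)"
    by (rule resid_sum[OF _ inj nd]) auto
  have "(\<Sum>c\<in>{1..int p - 1}. 1 / (of_int (2 * c))^k) = X p k / 2 ^ k"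
    unfolding X_def sum_divide_distrib by (simp add: power_mult_distrib mult.commute)
  hence "(\<Sum>c\<in>{1..int p - 1}. 1 / (of_int (2 * c))^k) - X p k = X p k * ((1 - 2^k) / 2^k)"
    by (simp add: field_simps)
  with m have "Mp p 1 (X p k * ((1 - 2^k) / 2^k))" by simp
  moreover have "Up p ((1 - 2^k) / 2^k)"
  proof -
    have "(1 - 2^k) / 2^k = (of_int (- (2^k - 1)) / of_int (2^k) :: rat)" by simp
    moreover have "\<not> int p dvd - (2^k - 1)" using assms(1) dvd_minus_iff by blast
    moreover have "\<not> int p dvd 2^k" using oddp prime_dvd_power[OF prI[OF pr]] by blast
    ultimately show ?thesis unfolding Up_def by blast
  qed
  ultimately show ?thesis using Mp_div_unit[OF pr] by blast
qed

lemma X_rev: "(\<Sum>c\<in>{1..int p - 1}. g (int p - c)) = (\<Sum>c\<in>{1..int p - 1}. g c)"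
  by (rule sum.reindex_bij_witness[of _ "\<lambda>c. int p - c" "\<lambda>c. int p - c"]) auto

lemma wolst:
  assumes "p > 3"
  shows "Mp p 2 (X p 1)"
proof -
  have p1: "p > 1" using pr prime_gt_1_nat by blast
  have oddp: "\<not> int p dvd 2"
  proof
    assume "int p dvd 2" hence "int p \<le> 2" by (rule zdvd_imp_le) simp
    thus False using assms by simp
  qed
  have X2: "Mp p 1 (X p 2)" by (rule X_Mp) (use assms in \<open>auto dest: zdvd_imp_le\<close>)
  have "2 * X p 1 = (\<Sum>c\<in>{1..int p - 1}. 1 / of_int c + 1 / of_int (int p - c))"
    unfolding X_def sum.distrib X_rev[of "\<lambda>c. 1 / of_int c"] by simp
  also have "\<dots> = of_nat p * (\<Sum>c\<in>{1..int p - 1}. 1 / (of_int c * of_int (int p - c)))"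
    unfolding sum_distrib_left by (rule sum.cong) (auto simp: field_simps)
  finally have e: "2 * X p 1 = of_nat p * (\<Sum>c\<in>{1..int p - 1}. 1 / (of_int c * of_int (int p - c)))" .
  have "Mp p 1 ((\<Sum>c\<in>{1..int p - 1}. 1 / (of_int c * of_int (int p - c))) + X p 2)"
    unfolding X_def sum.distrib[symmetric]
  proof (rule Mp_sum[OF pr])
    fix c assume c: "c \<in> {1..int p - 1}"
    have nz: "(of_int c :: rat) \<noteq> 0" "(of_int (int p - c) :: rat) \<noteq> 0" using c by auto
    have ndc: "\<not> int p dvd c" "\<not> int p dvd (int p - c)" using c zdvd_imp_le by fastforce+
    define D where "D = (of_int c * of_int c * of_int (int p - c) :: rat)"
    have e: "1 / (of_int c * of_int (int p - c)) + 1 / (of_int c)^2 = of_nat p * (1 / D)"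
      using nz unfolding D_def by (simp add: field_simps power2_eq_square)
    have "Up p D" unfolding D_def using Up_mult[OF pr] Up_of_int[OF pr] ndc by blast
    hence "Mp p 1 (of_nat p * (1 / D))" using Mp_mult_R[OF pr Mp_p[OF pr]] Up_inv_Rp[OF pr] by blast
    thus "Mp p 1 (1 / (of_int c * of_int (int p - c)) + 1 / (of_int c)^2)" unfolding e .
  qed
  hence "Mp p 1 (\<Sum>c\<in>{1..int p - 1}. 1 / (of_int c * of_int (int p - c)))"
    using Mp_diff[OF pr _ X2] by fastforce
  hence "Mp p (Suc 1) (of_nat p * (\<Sum>c\<in>{1..int p - 1}. 1 / (of_int c * of_int (int p - c))))" 
    using Mp_multp[OF pr] by blast
  hence "Mp p 2 (2 * X p 1)" unfolding e by (simp add: numeral_2_eq_2)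
  moreover have "Rp p (1/2)" using Up_inv_Rp[OF pr Up_of_int[OF pr oddp]] by simp
  ultimately have "Mp p 2 ((2 * X p 1) * (1/2))" using Mp_mult_R[OF pr] by blast
  thus ?thesis by simp
qed

end


definition good :: "nat \<Rightarrow> rat \<Rightarrow> rat \<Rightarrow> (rat \<Rightarrow> rat) \<Rightarrow> bool" where
  "good p d h F \<longleftrightarrow> Rp p (F 0) \<and> Mp p 1 (F d - F 0) \<and> Mp p 1 (F h - F 0) \<and>
     Rp p ((F h - F 0) / h) \<and> Mp p 2 (F d - F 0 - d * ((F h - F 0) / h))"

context fixes p :: nat and d h :: rat
  assumes pr: "prime p" and dM: "Mp p 1 d" and hM: "Mp p 1 h" and h0: "h \<noteq> 0"
begin

lemma good_const: "Rp p c \<Longrightarrow> good p d h (\<lambda>_. c)"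
  unfolding good_def using pr by simp

lemma good_id: "good p d h (\<lambda>z. z)"
  unfolding good_def using pr dM hM h0 by simp

lemma good_add: assumes F: "good p d h F" and G: "good p d h G" shows "good p d h (\<lambda>z. F z + G z)"
proof -
  define DF where "DF = (F h - F 0) / h"
  define DG where "DG = (G h - G 0) / h"
  have F': "Rp p (F 0)" "Mp p 1 (F d - F 0)" "Mp p 1 (F h - F 0)" "Rp p DF" "Mp p 2 (F d - F 0 - d * DF)"
    using F unfolding good_def DF_def by auto
  have G': "Rp p (G 0)" "Mp p 1 (G d - G 0)" "Mp p 1 (G h - G 0)" "Rp p DG" "Mp p 2 (G d - G 0 - d * DG)"
    using G unfolding good_def DG_def by auto
  have e1: "F d + G d - (F 0 + G 0) = (F d - F 0) + (G d - G 0)" by simp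
  have e2: "F h + G h - (F 0 + G 0) = (F h - F 0) + (G h - G 0)" by simp
  have e3: "(F h + G h - (F 0 + G 0)) / h = DF + DG" unfolding DF_def DG_def by (simp add: diff_divide_distrib add_divide_distrib)
  have e4: "F d + G d - (F 0 + G 0) - d * ((F h + G h - (F 0 + G 0)) / h) =
    (F d - F 0 - d * DF) + (G d - G 0 - d * DG)" unfolding e3 by (simp add: algebra_simps)
  show ?thesis unfolding good_def
  proof (intro conjI)
    show "Rp p (F 0 + G 0)" using Rp_add[OF pr F'(1) G'(1)] .
    show "Mp p 1 (F d + G d - (F 0 + G 0))" unfolding e1 using Mp_add[OF pr F'(2) G'(2)] .
    show "Mp p 1 (F h + G h - (F 0 + G 0))" unfolding e2 using Mp_add[OF pr F'(3) G'(3)] .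
    show "Rp p ((F h + G h - (F 0 + G 0)) / h)" unfolding e3 using Rp_add[OF pr F'(4) G'(4)] .
    show "Mp p 2 (F d + G d - (F 0 + G 0) - d * ((F h + G h - (F 0 + G 0)) / h))"
      unfolding e4 using Mp_add[OF pr F'(5) G'(5)] .
  qed
qed

lemma good_mult: assumes F: "good p d h F" and G: "good p d h G" shows "good p d h (\<lambda>z. F z * G z)"
proof -
  define F0 where "F0 = F 0"
  define Fd where "Fd = F d"
  define Fh where "Fh = F h"
  define DF where "DF = (F h - F 0) / h"
  define G0 where "G0 = G 0"
  define Gd where "Gd = G d"
  define Gh where "Gh = G h"
  define DG where "DG = (G h - G 0) / h"
  have F': "Rp p F0" "Mp p 1 (Fd - F0)" "Mp p 1 (Fh - F0)" "Rp p DF" "Mp p 2 (Fd - F0 - d * DF)"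
    using F unfolding good_def F0_def Fd_def Fh_def DF_def by auto
  have G': "Rp p G0" "Mp p 1 (Gd - G0)" "Mp p 1 (Gh - G0)" "Rp p DG" "Mp p 2 (Gd - G0 - d * DG)"
    using G unfolding good_def G0_def Gd_def Gh_def DG_def by auto
  have RFd: "Rp p Fd" using Rp_add[OF pr F'(1) Mp_Rp[OF pr F'(2)]] by simp
  have RFh: "Rp p Fh" using Rp_add[OF pr F'(1) Mp_Rp[OF pr F'(3)]] by simp
  have 1: "Rp p (F0 * G0)" using Rp_mult[OF pr F'(1) G'(1)] .
  have "Fd * Gd - F0 * G0 = Fd * (Gd - G0) + G0 * (Fd - F0)" by (simp add: algebra_simps)
  hence 2: "Mp p 1 (Fd * Gd - F0 * G0)" using Mp_add[OF pr Mp_mult_L[OF pr RFd G'(2)] Mp_mult_L[OF pr G'(1) F'(2)]] by simp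
  have "Fh * Gh - F0 * G0 = Fh * (Gh - G0) + G0 * (Fh - F0)" by (simp add: algebra_simps)
  hence 3: "Mp p 1 (Fh * Gh - F0 * G0)" using Mp_add[OF pr Mp_mult_L[OF pr RFh G'(3)] Mp_mult_L[OF pr G'(1) F'(3)]] by simp
  have eD: "(Fh * Gh - F0 * G0) / h = Fh * DG + G0 * DF" unfolding DF_def DG_def Fh_def[symmetric] F0_def[symmetric]
      Gh_def[symmetric] G0_def[symmetric] using h0 by (simp add: field_simps)
  have 4: "Rp p ((Fh * Gh - F0 * G0) / h)" unfolding eD using RFh G'(4) G'(1) F'(4) pr by (simp add: Rp_add Rp_mult)
  have eE: "Fd * Gd - F0 * G0 - d * ((Fh * Gh - F0 * G0) / h) =
    Fd * (Gd - G0 - d * DG) + G0 * (Fd - F0 - d * DF) + (d * DG) * ((Fd - F0) - (Fh - F0))"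
    unfolding eD by (simp add: algebra_simps)
  have dDG: "Mp p 1 (d * DG)" using Mp_mult_R[OF pr dM G'(4)] .
  have "Mp p (1 + 1) ((d * DG) * ((Fd - F0) - (Fh - F0)))" using Mp_mult[OF pr dDG Mp_diff[OF pr F'(2) F'(3)]] .
  hence m3: "Mp p 2 ((d * DG) * ((Fd - F0) - (Fh - F0)))" by (metis one_add_one)
  have 5: "Mp p 2 (Fd * Gd - F0 * G0 - d * ((Fh * Gh - F0 * G0) / h))"
    unfolding eE using Mp_add[OF pr Mp_add[OF pr Mp_mult_L[OF pr RFd G'(5)] Mp_mult_L[OF pr G'(1) F'(5)]] m3] .
  show ?thesis unfolding good_def using 1 2 3 4 5 unfolding F0_def Fd_def Fh_def G0_def Gd_def Gh_def by simp
qed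

lemma good_sum: "(\<And>i. i \<in> A \<Longrightarrow> good p d h (f i)) \<Longrightarrow> good p d h (\<lambda>z. \<Sum>i\<in>A. f i z)"
proof (induction A rule: infinite_finite_induct)
  case (infinite A) then show ?case using good_const[of 0] pr by simp
next
  case empty then show ?case using good_const[of 0] pr by simp
next
  case (insert x F) then show ?case using good_add[of "f x" "\<lambda>z. \<Sum>i\<in>F. f i z"] by simp
qed

lemma good_prod: "(\<And>i. i \<in> A \<Longrightarrow> good p d h (f i)) \<Longrightarrow> good p d h (\<lambda>z. \<Prod>i\<in>A. f i z)"
proof (induction A rule: infinite_finite_induct)
  case (infinite A) then show ?case using good_const[of 1] pr by simp
next
  case empty then show ?case using good_const[of 1] pr by simp
next
  case (insert x F) then show ?case using good_mult[of "f x" "\<lambda>z. \<Prod>i\<in>F. f i z"] by simp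
qed

lemma good_lin: "Rp p a \<Longrightarrow> Rp p b \<Longrightarrow> good p d h (\<lambda>z. a * z + b)"
  using good_add[OF good_mult[OF good_const good_id] good_const] by simp

lemma good_cmult: "Rp p a \<Longrightarrow> good p d h F \<Longrightarrow> good p d h (\<lambda>z. a * F z)"
  using good_mult[OF good_const] by simp

end


definition Ak :: "rat \<Rightarrow> nat \<Rightarrow> rat" where
  "Ak x k = (\<Prod>j<k. (x + of_nat j) * (1 - x + of_nat j) / (of_nat j + 1)^2)"

definition Nk :: "nat \<Rightarrow> nat \<Rightarrow> rat \<Rightarrow> rat" where
  "Nk s k z = (\<Prod>j<k. (z + (of_nat j - of_nat s) * (of_nat j + of_nat s + 1)) / (of_nat j + 1)^2)"

lemma Ak_Nk: "Ak x k = Nk s k ((x + of_nat s) * (1 + of_nat s - x))"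
  unfolding Ak_def Nk_def by (rule prod.cong) (simp_all add: algebra_simps)

lemma Nk_node: "Nk s k ((of_nat s - of_nat i) * (of_nat s + of_nat i + 1)) = ff i k"
  unfolding ff_def Nk_def by (rule prod.cong) (simp_all add: algebra_simps)

lemma Nk_0: "Nk s k 0 = ff s k"
  using Nk_node[of s k s] by simp


lemma sum_ff_trunc:
  assumes "i \<le> N"
  shows "(\<Sum>k=1..N. ff i k * c k) = (\<Sum>k=1..i. ff i k * c k)"
  by (rule sum.mono_neutral_cong_right) (use assms in \<open>auto simp: ff_zero\<close>)

context fixes p :: nat and d h :: rat
  assumes pr: "prime p" and dM: "Mp p 1 d" and hM: "Mp p 1 h" and h0: "h \<noteq> 0"
begin

lemma Nk_good: assumes "k < p" shows "good p d h (Nk s k)"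
proof -
  have e: "Nk s k = (\<lambda>z. \<Prod>j<k. (1 / (of_nat j + 1)^2) * z + (of_nat j - of_nat s) * (of_nat j + of_nat s + 1) / (of_nat j + 1)^2)"
    unfolding Nk_def by (rule ext, rule prod.cong) (simp_all add: add_divide_distrib)
  show ?thesis unfolding e
  proof (rule good_prod[OF pr dM hM h0])
    fix j assume j: "j \<in> {..<k}"
    have "Up p (of_nat (j + 1))" using Up_nat[OF pr, of "j+1"] j assms by simp
    hence U: "Up p ((of_nat j + 1)^2)" using Up_power[OF pr, of "of_nat (j+1)" 2] by (simp add: add.commute)
    have "Rp p (1 / (of_nat j + 1)^2)" using Up_inv_Rp[OF pr U] .
    moreover have "Rp p ((of_nat j - of_nat s) * (of_nat j + of_nat s + 1) / (of_nat j + 1)^2)"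
      using Rp_mult[OF pr _ Up_inv_Rp[OF pr U], of "(of_nat j - of_nat s) * (of_nat j + of_nat s + 1)"] pr
      by (simp add: Rp_mult Rp_diff Rp_add)
    ultimately show "good p d h (\<lambda>z. 1 / (of_nat j + 1)^2 * z + (of_nat j - of_nat s) * (of_nat j + of_nat s + 1) / (of_nat j + 1)^2)"
      using good_lin[OF pr dM hM h0] by blast
  qed
qed

lemma F_good: assumes "\<And>k. k \<in> {1..p-1} \<Longrightarrow> Rp p (c k)"
  shows "good p d h (\<lambda>z. \<Sum>k=1..p-1. c k * Nk s k z)"
proof (rule good_sum[OF pr dM hM h0])
  fix k assume k: "k \<in> {1..p-1}"
  hence "k < p" by auto
  thus "good p d h (\<lambda>z. c k * Nk s k z)" using good_cmult[OF pr dM hM h0 assms[OF k] Nk_good] by blast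
qed

end



lemma cs_trunc: "s \<le> N \<Longrightarrow> (\<Sum>k=1..N. 1 / of_nat k * ff s k) = - 2 * H s"
  using sum_ff_trunc[of s N "\<lambda>k. 1 / of_nat k"] cs_eq[of s] unfolding cs_def by (simp add: mult.commute)

lemma ds_trunc: "s \<le> N \<Longrightarrow> (\<Sum>k=1..N. 1 / (of_nat k)^2 * ff s k) = - 2 * (H s)^2"
  using sum_ff_trunc[of s N "\<lambda>k. 1 / (of_nat k)^2"] ds_eq[of s] unfolding ds_def by (simp add: mult.commute)

context fixes p s :: nat and x :: rat
  assumes pr: "prime p" and sp: "s < p" and uM: "Mp p 1 (x + of_nat s)"
begin

definition dl where "dl = (x + of_nat s) * (1 + of_nat s - x)"

lemma dl_M: "Mp p 1 dl"
proof -
  have "dl = (x + of_nat s) * (1 + 2 * of_nat s - (x + of_nat s))" unfolding dl_def by (simp add: algebra_simps)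
  moreover have "Rp p (1 + 2 * of_nat s - (x + of_nat s))"
    by (rule Rp_diff[OF pr]) (use Mp_Rp[OF pr uM] pr in \<open>simp_all add: Rp_add Rp_mult\<close>)
  ultimately show ?thesis using Mp_mult_R[OF pr uM] by simp
qed

lemma Rk: "k \<in> {1..p-1} \<Longrightarrow> Rp p (1 / of_nat k)"
  using Up_inv_Rp[OF pr Up_nat[OF pr]] by auto

lemma Rk2: "k \<in> {1..p-1} \<Longrightarrow> Rp p (1 / (of_nat k)^2)"
proof -
  assume "k \<in> {1..p-1}"
  hence "Rp p (1 / of_nat k * (1 / of_nat k))" using Rk Rp_mult[OF pr] by blast
  thus ?thesis by (simp add: power2_eq_square)
qed

lemma S1_eq: "(\<Sum>k=1..p-1. Ak x k / of_nat k) = (\<Sum>k=1..p-1. 1 / of_nat k * Nk s k dl)"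
  unfolding dl_def Ak_Nk[of x _ s] by simp

lemma S2_eq: "(\<Sum>k=1..p-1. Ak x k / (of_nat k)^2) = (\<Sum>k=1..p-1. 1 / (of_nat k)^2 * Nk s k dl)"
  unfolding dl_def Ak_Nk[of x _ s] by simp

lemma pM: "Mp p 1 (of_nat p)" using Mp_p[OF pr] .
lemma p0: "(of_nat p :: rat) \<noteq> 0" using pr by auto

lemma S2_cong: "Mp p 1 ((\<Sum>k=1..p-1. Ak x k / (of_nat k)^2) + 2 * (H s)^2)"
proof -
  have g: "good p dl (of_nat p) (\<lambda>z. \<Sum>k=1..p-1. 1 / (of_nat k)^2 * Nk s k z)"
    by (rule F_good[OF pr dl_M pM p0 Rk2])
  hence "Mp p 1 ((\<Sum>k=1..p-1. 1 / (of_nat k)^2 * Nk s k dl) - (\<Sum>k=1..p-1. 1 / (of_nat k)^2 * Nk s k 0))"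
    unfolding good_def by blast
  moreover have "(\<Sum>k=1..p-1. 1 / (of_nat k)^2 * Nk s k 0) = - 2 * (H s)^2"
    unfolding Nk_0 using ds_trunc[of s "p-1"] sp by simp
  ultimately show ?thesis unfolding S2_eq by simp
qed

lemma S1_cong_mid: assumes "2 * s + 1 = p"
  shows "Mp p 2 ((\<Sum>k=1..p-1. Ak x k / of_nat k) + 2 * H s)"
proof -
  define F where "F = (\<lambda>z. \<Sum>k=1..p-1. 1 / of_nat k * Nk s k z)"
  have g: "good p dl (of_nat p) F" unfolding F_def
    by (rule F_good[OF pr dl_M pM p0 Rk])
  hence m: "Mp p 2 (F dl - F 0 - dl * ((F (of_nat p) - F 0) / of_nat p))" and r: "Rp p ((F (of_nat p) - F 0) / of_nat p)"
    unfolding good_def by blast+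
  have "dl = (x + of_nat s) * (of_nat p - (x + of_nat s))" unfolding dl_def using assms[symmetric]
    by (simp add: algebra_simps)
  moreover have "Mp p 1 (of_nat p - (x + of_nat s))" using Mp_diff[OF pr pM uM] .
  ultimately have "Mp p (1 + 1) dl" using Mp_mult[OF pr uM] by simp
  hence d2: "Mp p 2 dl" by (metis one_add_one)
  have "Mp p 2 (F dl - F 0)" 
    using Mp_add[OF pr m Mp_mult_R[OF pr d2 r]] by simp
  moreover have "F 0 = - 2 * H s" unfolding F_def Nk_0 using cs_trunc[of s "p-1"] sp by simp
  moreover have "(\<Sum>k=1..p-1. Ak x k / of_nat k) = F dl" unfolding F_def S1_eq ..
  ultimately show ?thesis by simp
qed

lemma S1_cong: assumes "2 * s + 1 \<noteq> p"
  shows "Mp p 2 ((\<Sum>k=1..p-1. Ak x k / of_nat k) - 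
     (- 2 * H s + dl * (- 2 * H (p - 1 - s) + 2 * H s) /
       ((of_nat s - of_nat (p - 1 - s)) * (of_nat s + of_nat (p - 1 - s) + 1))))"
proof -
  define s' where "s' = p - 1 - s"
  define hh where "hh = (of_nat s - of_nat s') * (of_nat s + of_nat s' + 1 :: rat)"
  have ss: "s + s' + 1 = p" unfolding s'_def using sp by simp
  have hh': "hh = (of_nat s - of_nat s') * of_nat p" unfolding hh_def ss[symmetric] by simp
  have hM: "Mp p 1 hh" unfolding hh' using Mp_mult_L[OF pr _ pM] pr by (simp add: Rp_diff)
  have "s \<noteq> s'" using assms ss by auto
  hence h0: "hh \<noteq> 0" unfolding hh' using p0 by simp
  define F where "F = (\<lambda>z. \<Sum>k=1..p-1. 1 / of_nat k * Nk s k z)"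
  have g: "good p dl hh F" unfolding F_def
    by (rule F_good[OF pr dl_M hM h0 Rk])
  hence m: "Mp p 2 (F dl - F 0 - dl * ((F hh - F 0) / hh))" unfolding good_def by blast
  have F0: "F 0 = - 2 * H s" unfolding F_def Nk_0 using cs_trunc[of s "p-1"] sp by simp
  have Fh: "F hh = - 2 * H s'" unfolding F_def hh_def Nk_node using cs_trunc[of s' "p-1"] unfolding s'_def by simp
  have SF: "(\<Sum>k=1..p-1. Ak x k / of_nat k) = F dl" unfolding F_def S1_eq ..
  have "(\<Sum>k=1..p-1. Ak x k / of_nat k) - (- 2 * H s + dl * (- 2 * H s' + 2 * H s) / hh)
     = F dl - F 0 - dl * ((F hh - F 0) / hh)" unfolding SF F0 Fh using h0 by (simp add: field_simps)
  thus ?thesis using m unfolding s'_def[symmetric] hh_def[symmetric] by simp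
qed

end


context fixes p :: nat assumes pr: "prime p" and p2: "p \<noteq> 2" begin

lemma nd2: "\<not> int p dvd 2"
proof
  assume "int p dvd 2" hence "p dvd 2" by presburger
  hence "p \<le> 2" by (rule dvd_imp_le) simp
  thus False using prime_ge_2_nat[OF pr] p2 by simp
qed

lemma Rp_half: "Rp p (1/2)" using Up_inv_Rp[OF pr Up_of_int[OF pr nd2]] by simp

lemma expand2:
  assumes fin: "finite J" and v: "\<And>j. j \<in> J \<Longrightarrow> Mp p 1 (v j)"
  shows "Mp p 3 ((\<Prod>j\<in>J. 1 + v j) - (1 + (\<Sum>j\<in>J. v j) + ((\<Sum>j\<in>J. v j)^2 - (\<Sum>j\<in>J. (v j)^2)) / 2))"
  using fin v
proof (induction J rule: finite_induct)
  case empty then show ?case using Mp_zero[OF pr] by simp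
next
  case (insert a F)
  define V1 where "V1 = (\<Sum>j\<in>F. v j)"
  define V2 where "V2 = (\<Sum>j\<in>F. (v j)^2)"
  define P where "P = (\<Prod>j\<in>F. 1 + v j)"
  have IH: "Mp p 3 (P - (1 + V1 + (V1^2 - V2) / 2))" using insert unfolding V1_def V2_def P_def by simp
  have va: "Mp p 1 (v a)" using insert by simp
  have V1M: "Mp p 1 V1" unfolding V1_def by (rule Mp_sum[OF pr]) (use insert in auto)
  have V2M: "Mp p 2 V2" unfolding V2_def
  proof (rule Mp_sum[OF pr])
    fix j assume "j \<in> F" hence "Mp p 1 (v j)" using insert by simp
    hence "Mp p (1+1) (v j * v j)" using Mp_mult[OF pr] by blast
    thus "Mp p 2 ((v j)^2)" unfolding one_add_one by (simp add: power2_eq_square)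
  qed
  have R1: "Rp p (1 + v a)" using Mp_Rp[OF pr va] pr by (simp add: Rp_add)
  have e: "(\<Prod>j\<in>insert a F. 1 + v j) - (1 + (\<Sum>j\<in>insert a F. v j) + ((\<Sum>j\<in>insert a F. v j)^2 - (\<Sum>j\<in>insert a F. (v j)^2)) / 2)
     = (P - (1 + V1 + (V1^2 - V2) / 2)) * (1 + v a) + v a * ((V1 * V1 - V2) * (1/2))"
    using insert unfolding P_def V1_def V2_def by (simp add: field_simps power2_eq_square)
  have m1: "Mp p 3 ((P - (1 + V1 + (V1^2 - V2) / 2)) * (1 + v a))" using Mp_mult_R[OF pr IH R1] .
  have "Mp p (1+1) (V1 * V1)" using Mp_mult[OF pr V1M V1M] .
  hence "Mp p 2 (V1 * V1 - V2)" using Mp_diff[OF pr _ V2M] by (metis one_add_one)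
  hence "Mp p 2 ((V1 * V1 - V2) * (1/2))" using Mp_mult_R[OF pr _ Rp_half] by blast
  hence "Mp p (1+2) (v a * ((V1 * V1 - V2) * (1/2)))" using Mp_mult[OF pr va] by blast
  hence m2: "Mp p 3 (v a * ((V1 * V1 - V2) * (1/2)))" by (simp add: numeral_3_eq_3)
  show ?case unfolding e using Mp_add[OF pr m1 m2] .
qed


lemma Mp3_of_sq: "Mp p 1 a \<Longrightarrow> Mp p 2 b \<Longrightarrow> Mp p 3 (a * b)"
  using Mp_mult[OF pr, of 1 a 2 b] by (simp add: numeral_3_eq_3 numeral_2_eq_2)

lemma Mp2_sq: "Mp p 1 a \<Longrightarrow> Mp p 1 b \<Longrightarrow> Mp p 2 (a * b)"
  using Mp_mult[OF pr, of 1 a 1 b] by (simp add: numeral_2_eq_2)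

lemma Up_ip: assumes "0 < i" "i < p" shows "Up p (of_nat i - of_nat p)"
proof -
  have nd: "\<not> int p dvd (int i - int p)"
  proof
    assume "int p dvd (int i - int p)"
    hence "int p dvd int i" by (metis dvd_diff_commute dvd_refl dvd_diff zdvd_zdiffD)
    hence "p dvd i" by (simp only: int_dvd_int_iff)
    thus False using assms by (simp add: nat_dvd_not_less)
  qed
  show ?thesis using Up_of_int[OF pr nd] by simp
qed

lemma expand_lin:
  assumes fin: "finite J" and w: "Mp p 1 w" and b: "\<And>j. j \<in> J \<Longrightarrow> Up p (b j)"
    and B1: "Mp p 1 (\<Sum>j\<in>J. 1 / b j)" and B2: "Mp p 1 (\<Sum>j\<in>J. 1 / (b j)^2)"
  shows "Mp p 3 ((\<Prod>j\<in>J. 1 + w / b j) - (1 + w * (\<Sum>j\<in>J. 1 / b j)))"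
proof -
  define S1 where "S1 = (\<Sum>j\<in>J. 1 / b j)"
  define S2 where "S2 = (\<Sum>j\<in>J. 1 / (b j)^2)"
  define PP where "PP = (\<Prod>j\<in>J. 1 + w / b j)"
  have v: "Mp p 1 (w / b j)" if "j \<in> J" for j
    using Mp_mult_R[OF pr w Up_inv_Rp[OF pr b[OF that]]] by simp
  have e1: "(\<Sum>j\<in>J. w / b j) = w * S1" unfolding S1_def by (simp add: sum_distrib_left)
  have e2: "(\<Sum>j\<in>J. (w / b j)^2) = w * (w * S2)" unfolding S2_def
    by (simp add: sum_distrib_left power_divide power2_eq_square)
  have m: "Mp p 3 (PP - (1 + w * S1 + ((w * S1)^2 - w * (w * S2)) / 2))"
    using expand2[OF fin, of "\<lambda>j. w / b j"] v unfolding e1 e2 PP_def by blast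
  have wB: "Mp p 2 (w * S1)" using Mp2_sq[OF w B1] unfolding S1_def .
  have "Mp p 3 (w * (w * S1 * S1))" 
    using Mp3_of_sq[OF w Mp_mult_R[OF pr wB Mp_Rp[OF pr B1]]] unfolding S1_def by (simp add: mult.assoc)
  moreover have "Mp p 3 (w * (w * S2))" using Mp3_of_sq[OF w Mp2_sq[OF w B2]] unfolding S2_def .
  ultimately have "Mp p 3 ((w * (w * S1 * S1) - w * (w * S2)) * (1/2))"
    using Mp_mult_R[OF pr Mp_diff[OF pr] Rp_half] by blast
  hence mm: "Mp p 3 ((PP - (1 + w * S1 + ((w * S1)^2 - w * (w * S2)) / 2)) + (w * (w * S1 * S1) - w * (w * S2)) * (1/2))"
    using Mp_add[OF pr m] by blast
  have eq: "(PP - (1 + w * S1 + ((w * S1)^2 - w * (w * S2)) / 2)) + (w * (w * S1 * S1) - w * (w * S2)) * (1/2)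
     = PP - (1 + w * S1)" by (simp add: field_simps power2_eq_square)
  have "Mp p 3 (PP - (1 + w * S1))" using mm unfolding eq .
  thus ?thesis unfolding PP_def S1_def .
qed

lemma P0_cong:
  assumes "s < p"
  shows "Mp p 3 ((\<Prod>i\<in>{1..s}. (of_nat p + of_nat i) / (of_nat i - of_nat p)) - 
           (1 + 2 * of_nat p * H s + 2 * (of_nat p)^2 * (H s)^2))"
  using assms
proof (induction s)
  case 0 then show ?case using Mp_zero[OF pr] by simp
next
  case (Suc s)
  define pp where "pp = (of_nat p :: rat)"
  define ii where "ii = (of_nat (Suc s) :: rat)"
  define w where "w = pp / ii"
  define A where "A = pp * H s"
  define P0 where "P0 = (\<Prod>i\<in>{1..s}. (of_nat p + of_nat i) / (of_nat i - of_nat p) :: rat)"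
  define T where "T = 1 + 2 * A + 2 * A^2"
  have IH: "Mp p 3 (P0 - T)" using Suc unfolding P0_def T_def A_def pp_def by (simp add: power_mult_distrib mult.assoc)
  have Ui: "Up p ii" unfolding ii_def using Up_nat[OF pr, of "Suc s"] Suc by simp
  have ii0: "ii \<noteq> 0" using Up_nz[OF pr Ui] .
  have nd: "\<not> int p dvd (int (Suc s) - int p)"
  proof
    assume "int p dvd (int (Suc s) - int p)"
    hence "int p dvd int (Suc s)" by (metis dvd_diff_commute dvd_refl dvd_diff zdvd_zdiffD)
    hence "p dvd Suc s" by (simp only: int_dvd_int_iff)
    thus False using Suc by (simp add: nat_dvd_not_less)
  qed
  have Uip: "Up p (ii - pp)" unfolding ii_def pp_def using Up_of_int[OF pr nd] by simp
  have ip0: "ii - pp \<noteq> 0" using Up_nz[OF pr Uip] .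
  have wM: "Mp p 1 w" unfolding w_def pp_def using Mp_mult_R[OF pr Mp_p[OF pr] Up_inv_Rp[OF pr Ui]] by simp
  have RH: "Rp p (H s)" unfolding H_def by (rule Rp_sum[OF pr]) (use Suc in \<open>auto intro!: Up_inv_Rp[OF pr] Up_nat[OF pr]\<close>)
  have AM: "Mp p 1 A" unfolding A_def pp_def using Mp_mult_R[OF pr Mp_p[OF pr] RH] .
  have f: "(pp + ii) / (ii - pp) = (1 + 2 * w + 2 * w^2) + 2 * w^3 * (ii * (1 / (ii - pp)))"
    unfolding w_def using ii0 ip0 by (simp add: field_simps power2_eq_square power3_eq_cube)
  have w3: "Mp p 3 (2 * w^3 * (ii * (1 / (ii - pp))))"
  proof -
    have "Mp p 3 (w * (w * w))" using Mp3_of_sq[OF wM Mp2_sq[OF wM wM]] .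
    hence a: "Mp p 3 (w * (w * w) * (ii * (1 / (ii - pp))))"
      using Mp_mult_R[OF pr _ Rp_mult[OF pr Up_Rp[OF pr Ui] Up_inv_Rp[OF pr Uip]]] by blast
    have b: "Mp p 3 (2 * (w * (w * w) * (ii * (1 / (ii - pp)))))" using Mp_mult_L[OF pr Rp_numeral[OF pr] a] .
    have "2 * w^3 * (ii * (1 / (ii - pp))) = 2 * (w * (w * w) * (ii * (1 / (ii - pp))))" by (simp only: power3_eq_cube mult.assoc)
    thus ?thesis using b by (simp only:)
  qed
  have RP0: "Rp p P0" unfolding P0_def
  proof (rule Rp_prod[OF pr])
    fix i assume i: "i \<in> {1..s}"
    hence "Up p (of_nat i - of_nat p)" using Up_ip[of i] Suc by auto
    thus "Rp p ((of_nat p + of_nat i) / (of_nat i - of_nat p))" 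
      using Rp_mult[OF pr _ Up_inv_Rp[OF pr]] pr by (simp add: Rp_add)
  qed
  have Rf: "Rp p ((pp + ii) / (ii - pp))" 
    using Rp_mult[OF pr Rp_add[OF pr Up_Rp[OF pr Ui] Mp_Rp[OF pr Mp_p[OF pr]]] Up_inv_Rp[OF pr Uip]]
    unfolding pp_def by (simp add: divide_inverse add.commute)
  have RT: "Rp p T" unfolding T_def using Mp_Rp[OF pr AM] pr by (simp add: Rp_add Rp_mult Rp_power)
  define g where "g = 1 + 2 * w + 2 * w^2"
  define T' where "T' = 1 + 2 * (A + w) + 2 * (A + w)^2"
  have m1: "Mp p 3 ((P0 - T) * ((pp + ii) / (ii - pp)))" using Mp_mult_R[OF pr IH Rf] .
  have m2: "Mp p 3 (T * ((pp + ii) / (ii - pp) - g))" unfolding f g_def using Mp_mult_L[OF pr RT w3] by simp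
  have m3: "Mp p 3 (T * g - T')"
  proof -
    have "T * g - T' = 4 * (A * (w * w)) + 4 * (w * (A * A)) + 4 * (A * (A * (w * w)))"
      unfolding T_def g_def T'_def by (simp add: algebra_simps power2_eq_square)
    moreover have "Mp p 3 (A * (w * w))" using Mp3_of_sq[OF AM Mp2_sq[OF wM wM]] .
    moreover have "Mp p 3 (w * (A * A))" using Mp3_of_sq[OF wM Mp2_sq[OF AM AM]] .
    moreover have "Mp p 3 (A * (A * (w * w)))" using Mp_mult_L[OF pr Mp_Rp[OF pr AM] Mp3_of_sq[OF AM Mp2_sq[OF wM wM]]] by (simp add: mult.assoc)
    ultimately show ?thesis using Mp_add[OF pr] Mp_mult_L[OF pr Rp_numeral[OF pr]] by presburger
  qed
  have e: "(\<Prod>i\<in>{1..Suc s}. (of_nat p + of_nat i) / (of_nat i - of_nat p)) = P0 * ((pp + ii) / (ii - pp))"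
    unfolding P0_def pp_def ii_def by (simp add: prod.cl_ivl_Suc)
  have e2: "1 + 2 * of_nat p * H (Suc s) + 2 * (of_nat p)^2 * (H (Suc s))^2 = T'"
    unfolding T'_def A_def w_def pp_def ii_def H_Suc by (simp add: algebra_simps power2_eq_square add_divide_distrib)
  have "\<forall>F. P0 * F - T' = (P0 - T) * F + T * (F - g) + (T * g - T')"
    by (simp add: algebra_simps)
  hence E: "P0 * ((pp + ii) / (ii - pp)) - T' = (P0 - T) * ((pp + ii) / (ii - pp)) + T * ((pp + ii) / (ii - pp) - g) + (T * g - T')"
    by blast
  have "Mp p 3 ((P0 - T) * ((pp + ii) / (ii - pp)) + T * ((pp + ii) / (ii - pp) - g) + (T * g - T'))"
    using Mp_add[OF pr Mp_add[OF pr m1 m2] m3] .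
  hence "Mp p 3 (P0 * ((pp + ii) / (ii - pp)) - T')" unfolding E .
  thus ?case unfolding e e2 .
qed

end


context fixes p s :: nat assumes pr: "prime p" and p3: "p > 3" and sp: "s < p" begin

abbreviation "JJ \<equiv> {0..<p} - {s}"

lemma p2: "p \<noteq> 2" using p3 by simp

lemma JJ_fin: "finite JJ" by simp
lemma JJ_card: "card JJ = p - 1" using sp by simp

lemma inj_a: "inj_on (\<lambda>j. (int j - int s) mod int p) JJ"
proof (rule inj_onI)
  fix a b assume a: "a \<in> JJ" and b: "b \<in> JJ" and e: "(int a - int s) mod int p = (int b - int s) mod int p"
  hence "int p dvd (int a - int s) - (int b - int s)" by (simp add: mod_eq_dvd_iff)
  hence d: "int p dvd int a - int b" by simp
  then obtain q where q: "int a - int b = int p * q" by auto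
  have "q = 0"
  proof (rule ccontr)
    assume "q \<noteq> 0"
    hence "1 \<le> \<bar>q\<bar>" by linarith
    hence "int p * 1 \<le> int p * \<bar>q\<bar>" by (intro mult_left_mono) auto
    hence "\<bar>int p * q\<bar> \<ge> int p" by (simp add: abs_mult)
    thus False using q a b by auto
  qed
  thus "a = b" using q by simp
qed

lemma nd_a: "j \<in> JJ \<Longrightarrow> \<not> int p dvd (int j - int s)"
proof
  assume j: "j \<in> JJ" and d: "int p dvd (int j - int s)"
  then obtain q where q: "int j - int s = int p * q" by auto
  have "q = 0"
  proof (rule ccontr)
    assume "q \<noteq> 0"
    hence "1 \<le> \<bar>q\<bar>" by linarith
    hence "int p * 1 \<le> int p * \<bar>q\<bar>" by (intro mult_left_mono) auto
    hence "\<bar>int p * q\<bar> \<ge> int p" by (simp add: abs_mult)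
    thus False using q j sp by auto
  qed
  thus False using q j by simp
qed

lemma inj_b: "inj_on (\<lambda>j. (int p - (int j - int s)) mod int p) JJ"
proof (rule inj_onI)
  fix a b assume a: "a \<in> JJ" and b: "b \<in> JJ" and e: "(int p - (int a - int s)) mod int p = (int p - (int b - int s)) mod int p"
  hence "int p dvd (int p - (int a - int s)) - (int p - (int b - int s))" by (simp add: mod_eq_dvd_iff)
  hence "int p dvd (int b - int s) - (int a - int s)" by (simp add: algebra_simps)
  hence "(int b - int s) mod int p = (int a - int s) mod int p" by (simp add: mod_eq_dvd_iff)
  thus "a = b" using inj_a a b by (auto dest: inj_onD)
qed

lemma nd_b: assumes "j \<in> JJ" shows "\<not> int p dvd (int p - (int j - int s))"
proof
  assume "int p dvd (int p - (int j - int s))"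
  hence "int p dvd int p - (int p - (int j - int s))" by (rule dvd_diff[OF dvd_refl])
  thus False using nd_a[OF assms] by simp
qed

lemma pos_ne2: "\<not> int p dvd (2 ^ 1 - 1)" "\<not> int p dvd (2 ^ 2 - 1)"
proof -
  show "\<not> int p dvd (2 ^ 1 - 1)" using prime_gt_1_nat[OF pr] by simp
  show "\<not> int p dvd (2 ^ 2 - 1)"
  proof
    assume "int p dvd (2 ^ 2 - 1)" hence "int p dvd 3" by simp
    hence "int p \<le> 3" by (rule zdvd_imp_le) simp
    thus False using p3 by simp
  qed
qed

lemma Xk: "k \<in> {1,2} \<Longrightarrow> Mp p 1 (X p k)"
  using X_Mp[OF pr _ ] pos_ne2 p3 by auto

lemma sum_a: assumes "k \<in> {1,2}" shows "Mp p 1 (\<Sum>j\<in>JJ. 1 / (of_int (int j - int s))^k)"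
proof -
  have "Mp p 1 ((\<Sum>j\<in>JJ. 1 / (of_int (int j - int s))^k) - X p k)"
    by (rule resid_sum[OF pr JJ_fin inj_a _ JJ_card]) (use nd_a in blast)
  from Mp_add[OF pr this Xk[OF assms]] show ?thesis by simp
qed

lemma sum_b: assumes "k \<in> {1,2}" shows "Mp p 1 (\<Sum>j\<in>JJ. 1 / (of_int (int p - (int j - int s)))^k)"
proof -
  have "Mp p 1 ((\<Sum>j\<in>JJ. 1 / (of_int (int p - (int j - int s)))^k) - X p k)"
    by (rule resid_sum[OF pr JJ_fin inj_b _ JJ_card]) (use nd_b in blast)
  from Mp_add[OF pr this Xk[OF assms]] show ?thesis by simp
qed


definition cc :: "nat \<Rightarrow> int" where "cc j = (int j - int s) mod int p"

lemma img_a: "cc ` JJ = {1..int p - 1}"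
proof -
  have p1: "p > 1" using pr prime_gt_1_nat by blast
  have sub: "cc ` JJ \<subseteq> {1..int p - 1}"
  proof
    fix c assume "c \<in> cc ` JJ"
    then obtain j where j: "j \<in> JJ" "c = cc j" by blast
    have "c \<noteq> 0" using nd_a[OF j(1)] j(2) unfolding cc_def by (auto simp: dvd_eq_mod_eq_0)
    moreover have "0 \<le> c" "c < int p" using j p1 unfolding cc_def by auto
    ultimately show "c \<in> {1..int p - 1}" by auto
  qed
  have inj: "inj_on cc JJ" using inj_a unfolding cc_def .
  show ?thesis
    by (rule card_subset_eq) (use sub JJ_card card_image[OF inj] in auto)
qed

lemma prod_int_fact: "(\<Prod>c\<in>{1..int p - 1}. (of_int c :: rat)) = fact (p - 1)"
proof -
  have "(\<Prod>c\<in>{1..int p - 1}. (of_int c :: rat)) = (\<Prod>i\<in>{1..p-1}. of_nat i)"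
    by (rule prod.reindex_bij_witness[of _ int nat]) auto
  also have "\<dots> = fact (p - 1)" by (simp add: fact_prod)
  finally show ?thesis .
qed

lemma prod_cc: "(\<Prod>j\<in>JJ. (of_int (cc j) :: rat)) = fact (p - 1)"
proof -
  have inj: "inj_on cc JJ" using inj_a unfolding cc_def .
  have "(\<Prod>j\<in>JJ. (of_int (cc j) :: rat)) = (\<Prod>c\<in>cc ` JJ. of_int c)"
    using prod.reindex[OF inj, of "\<lambda>c. (of_int c :: rat)"] by simp
  thus ?thesis unfolding img_a prod_int_fact .
qed

lemma prod_pcc: "(\<Prod>j\<in>JJ. (of_nat p - of_int (cc j) :: rat)) = fact (p - 1)"
proof -
  have inj: "inj_on cc JJ" using inj_a unfolding cc_def .
  have "(\<Prod>j\<in>JJ. (of_nat p - of_int (cc j) :: rat)) = (\<Prod>c\<in>cc ` JJ. of_nat p - of_int c)"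
    using prod.reindex[OF inj, of "\<lambda>c. (of_nat p - of_int c :: rat)"] by simp
  also have "\<dots> = (\<Prod>c\<in>{1..int p - 1}. (of_int c :: rat))" unfolding img_a
    by (rule prod.reindex_bij_witness[of _ "\<lambda>c. int p - c" "\<lambda>c. int p - c"]) auto
  finally show ?thesis unfolding prod_int_fact .
qed

lemma cc_hi: "j \<in> JJ \<Longrightarrow> s < j \<Longrightarrow> cc j = int j - int s"
  unfolding cc_def by (auto intro: mod_pos_pos_trivial)

lemma cc_lo: assumes j: "j \<in> JJ" "j < s" shows "cc j = int j - int s + int p"
proof -
  have "cc j = (int j - int s + int p) mod int p" unfolding cc_def by simp
  also have "\<dots> = int j - int s + int p" by (rule mod_pos_pos_trivial) (use j sp in auto)
  finally show ?thesis .
qed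

lemma inv_neg: "1 / ((a::rat) - b) = - (1 / (b - a))"
  by (metis minus_diff_eq minus_divide_right)

lemma A1_eq: "(\<Sum>j\<in>JJ. 1 / (of_int (int j - int s) :: rat)) = H (p - 1 - s) - H s"
proof -
  have split: "JJ = {0..<s} \<union> {Suc s..<p}" using sp by auto
  have "(\<Sum>j\<in>JJ. 1 / (of_int (int j - int s) :: rat)) = 
     (\<Sum>j\<in>{0..<s}. 1 / (of_int (int j - int s) :: rat)) + (\<Sum>j\<in>{Suc s..<p}. 1 / (of_int (int j - int s) :: rat))"
    unfolding split by (rule sum.union_disjoint) auto
  moreover have "(\<Sum>j\<in>{0..<s}. 1 / (of_int (int j - int s) :: rat)) = - H s"
  proof -
    have "(\<Sum>j\<in>{0..<s}. 1 / (of_int (int j - int s) :: rat)) = (\<Sum>i\<in>{1..s}. - (1 / of_nat i))"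
      by (rule sum.reindex_bij_witness[of _ "\<lambda>i. s - i" "\<lambda>j. s - j"]) (auto simp: of_nat_diff inv_neg[of "of_nat _" "of_nat s"])
    thus ?thesis unfolding H_def by (simp add: sum_negf)
  qed
  moreover have "(\<Sum>j\<in>{Suc s..<p}. 1 / (of_int (int j - int s) :: rat)) = H (p - 1 - s)"
  proof -
    have "(\<Sum>j\<in>{Suc s..<p}. 1 / (of_int (int j - int s) :: rat)) = (\<Sum>i\<in>{1..p-1-s}. 1 / of_nat i)"
      by (rule sum.reindex_bij_witness[of _ "\<lambda>i. i + s" "\<lambda>j. j - s"]) (auto simp: of_nat_diff)
    thus ?thesis unfolding H_def .
  qed
  ultimately show ?thesis by simp
qed



lemma rho_alg: "(a::rat) \<noteq> 0 \<Longrightarrow> a + P \<noteq> 0 \<Longrightarrow> (a/(a+P))*((P - a)/(P - (a + P))) = (P + (-a))/((-a) - P)"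
proof -
  assume a: "a \<noteq> 0" "a + P \<noteq> 0"
  have 1: "P - (a + P) = -a" by simp
  have 2: "-a - P = - (a + P)" by simp
  have "(a/(a+P))*((P - a)/(-a)) = (a * (P - a))/((a+P) * (-a))" by simp
  also have "\<dots> = (a - P)/(a + P)" using a by (simp add: divide_simps)
  finally have x: "(a/(a+P))*((P - a)/(-a)) = (a - P)/(a + P)" .
  have n: "-a - P \<noteq> 0" using a(2) by (metis 2 neg_equal_0_iff_equal)
  have "(P + (-a))/(- (a + P)) = (a - P)/(a + P)" unfolding 2[symmetric] using a(2) n by (simp add: field_simps)
  with x show ?thesis unfolding 1 2 by simp
qed

lemma prod_rho: "(\<Prod>j\<in>JJ. (of_int (int j - int s) / of_int (cc j)) * ((of_nat p - of_int (int j - int s)) / (of_nat p - of_int (cc j))) :: rat)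
  = (\<Prod>i\<in>{1..s}. (of_nat p + of_nat i) / (of_nat i - of_nat p))"
proof -
  define \<rho> :: "nat \<Rightarrow> rat" where "\<rho> j = (of_int (int j - int s) / of_int (cc j)) * ((of_nat p - of_int (int j - int s)) / (of_nat p - of_int (cc j)))" for j
  have hi: "\<rho> j = 1" if "j \<in> JJ" "s < j" for j
  proof -
    have "(of_int (int j - int s) :: rat) \<noteq> 0" "(of_nat p - of_int (int j - int s) :: rat) \<noteq> 0"
      using that sp by auto
    thus ?thesis unfolding \<rho>_def cc_hi[OF that] by simp
  qed
  have lo: "\<rho> j = (of_nat p + of_nat (s - j)) / (of_nat (s - j) - of_nat p)" if "j \<in> JJ" "j < s" for j
  proof -
    have "(of_int (int j - int s) :: rat) \<noteq> 0" "(of_int (int j - int s) + of_nat p :: rat) \<noteq> 0"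
      using that sp by auto
    moreover have "(of_nat (s - j) :: rat) = - of_int (int j - int s)" using that by (simp add: of_nat_diff)
    ultimately show ?thesis unfolding \<rho>_def cc_lo[OF that] using rho_alg[of "of_int (int j - int s)" "of_nat p"]
      by simp
  qed
  have "(\<Prod>j\<in>JJ. \<rho> j) = (\<Prod>j\<in>{0..<s}. \<rho> j)"
    by (rule prod.mono_neutral_cong_right) (use sp hi in auto)
  also have "\<dots> = (\<Prod>j\<in>{0..<s}. (of_nat p + of_nat (s - j)) / (of_nat (s - j) - of_nat p))"
    by (rule prod.cong) (use sp lo in auto)
  also have "\<dots> = (\<Prod>i\<in>{1..s}. (of_nat p + of_nat i) / (of_nat i - of_nat p))"
    by (rule prod.reindex_bij_witness[of _ "\<lambda>i. s - i" "\<lambda>j. s - j"]) auto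
  finally show ?thesis unfolding \<rho>_def .
qed

lemma A1B1: "Mp p 2 ((\<Sum>j\<in>JJ. 1 / (of_int (int j - int s) :: rat)) + (\<Sum>j\<in>JJ. 1 / (of_int (int p - (int j - int s)) :: rat)))"
proof -
  define a where "a j = (of_int (int j - int s) :: rat)" for j
  define b where "b j = (of_int (int p - (int j - int s)) :: rat)" for j
  have Ua: "Up p (a j)" if "j \<in> JJ" for j unfolding a_def using Up_of_int[OF pr nd_a[OF that]] .
  have Ub: "Up p (b j)" if "j \<in> JJ" for j unfolding b_def using Up_of_int[OF pr nd_b[OF that]] .
  have ab: "a j + b j = of_nat p" for j unfolding a_def b_def by simp
  have t1: "1 / a j + 1 / b j = of_nat p * (1 / (a j * b j))" if "j \<in> JJ" for j
    using Up_nz[OF pr Ua[OF that]] Up_nz[OF pr Ub[OF that]] ab[of j] by (simp add: field_simps)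
  have t2: "1 / (a j * b j) = of_nat p * (1 / (a j * a j * b j)) - 1 / (a j)^2" if "j \<in> JJ" for j
    using Up_nz[OF pr Ua[OF that]] Up_nz[OF pr Ub[OF that]] ab[of j] by (simp add: field_simps power2_eq_square)
  have "Mp p 1 (\<Sum>j\<in>JJ. of_nat p * (1 / (a j * a j * b j)))"
    by (rule Mp_sum[OF pr], rule Mp_mult_R[OF pr Mp_p[OF pr]], rule Up_inv_Rp[OF pr])
       (use Ua Ub Up_mult[OF pr] in blast)
  moreover have "Mp p 1 (\<Sum>j\<in>JJ. 1 / (a j)^2)" using sum_a[of 2] unfolding a_def by simp
  ultimately have "Mp p 1 ((\<Sum>j\<in>JJ. of_nat p * (1 / (a j * a j * b j))) - (\<Sum>j\<in>JJ. 1 / (a j)^2))"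
    using Mp_diff[OF pr] by blast
  also have "(\<Sum>j\<in>JJ. of_nat p * (1 / (a j * a j * b j))) - (\<Sum>j\<in>JJ. 1 / (a j)^2) = (\<Sum>j\<in>JJ. 1 / (a j * b j))"
    unfolding sum_subtractf[symmetric] by (rule sum.cong) (use t2 in auto)
  finally have "Mp p 1 (\<Sum>j\<in>JJ. 1 / (a j * b j))" .
  hence "Mp p (Suc 1) (of_nat p * (\<Sum>j\<in>JJ. 1 / (a j * b j)))" using Mp_multp[OF pr] by blast
  hence "Mp p 2 (\<Sum>j\<in>JJ. of_nat p * (1 / (a j * b j)))" by (simp add: numeral_2_eq_2 sum_distrib_left)
  also have "(\<Sum>j\<in>JJ. of_nat p * (1 / (a j * b j))) = (\<Sum>j\<in>JJ. 1 / a j) + (\<Sum>j\<in>JJ. 1 / b j)"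
    unfolding sum.distrib[symmetric] by (rule sum.cong) (use t1 in auto)
  finally show ?thesis unfolding a_def b_def .
qed


lemma Mp_trans: assumes "Mp p e (a - b)" "Mp p e (b - c)" shows "Mp p e (a - c)"
proof -
  have "a - c = (a - b) + (b - c)" by simp
  thus ?thesis using Mp_add[OF pr assms] by simp
qed

lemma fac_alg0:
  assumes "(A::rat) \<noteq> 0" "B \<noteq> 0" "C \<noteq> 0" "D \<noteq> 0"
  shows "(A + U) * (B - U) / (C * D) = ((A / C) * (B / D)) * ((1 + U / A) * (1 + (- U) / B))"
proof -
  have 1: "1 + U / A = (A + U) / A" using assms by (simp add: field_simps)
  have 2: "1 + (- U) / B = (B - U) / B" using assms by (simp add: field_simps)
  show ?thesis unfolding 1 2 using assms by (simp add: field_simps)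
qed
lemma fac_alg:
  assumes "(A::rat) \<noteq> 0" "P - A \<noteq> 0" "C \<noteq> 0" "P - C \<noteq> 0"
  shows "(A + U) * (P - A - U) / (C * (P - C)) = ((A / C) * ((P - A) / (P - C))) * ((1 + U / A) * (1 + (- U) / (P - A)))"
  using fac_alg0[OF assms, of U] by simp

lemma Pcong:
  assumes uM: "Mp p 1 u"
  shows "Mp p 3 ((\<Prod>j\<in>JJ. of_int (int j - int s) + u) * (\<Prod>j\<in>JJ. of_nat p - of_int (int j - int s) - u) / (fact (p-1))^2
     - (1 + 2 * of_nat p * H s + 2 * (of_nat p)^2 * (H s)^2 + 2 * u * (H (p-1-s) - H s)))"
proof -
  define a where "a j = (of_int (int j - int s) :: rat)" for j
  define b where "b j = (of_int (int p - (int j - int s)) :: rat)" for j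
  define c where "c j = (of_int (cc j) :: rat)" for j
  define A1 where "A1 = (\<Sum>j\<in>JJ. 1 / a j)"
  define B1 where "B1 = (\<Sum>j\<in>JJ. 1 / b j)"
  define E1 where "E1 = (\<Prod>j\<in>JJ. 1 + u / a j)"
  define E2 where "E2 = (\<Prod>j\<in>JJ. 1 + (- u) / b j)"
  define P0 where "P0 = (\<Prod>i\<in>{1..s}. (of_nat p + of_nat i) / (of_nat i - of_nat p) :: rat)"
  define T where "T = 1 + 2 * of_nat p * H s + 2 * (of_nat p)^2 * (H s)^2"
  have Ua: "Up p (a j)" if "j \<in> JJ" for j unfolding a_def using Up_of_int[OF pr nd_a[OF that]] .
  have Ub: "Up p (b j)" if "j \<in> JJ" for j unfolding b_def using Up_of_int[OF pr nd_b[OF that]] .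
  have bab: "b j = of_nat p - a j" for j unfolding a_def b_def by simp
  have cnz: "c j \<noteq> 0" "of_nat p - c j \<noteq> 0" if "j \<in> JJ" for j
  proof -
    have "cc j \<in> {1..int p - 1}" using img_a that by blast
    thus "c j \<noteq> 0" "of_nat p - c j \<noteq> 0" unfolding c_def by auto
  qed
  have fac: "(a j + u) * (of_nat p - a j - u) / (c j * (of_nat p - c j)) =
      ((a j / c j) * ((of_nat p - a j) / (of_nat p - c j))) * ((1 + u / a j) * (1 + (- u) / b j))" if "j \<in> JJ" for j
  proof -
    have "a j \<noteq> 0" "of_nat p - a j \<noteq> 0" using Up_nz[OF pr Ua[OF that]] Up_nz[OF pr Ub[OF that]] bab by auto
    thus ?thesis using fac_alg[of "a j" "of_nat p" "c j" u] cnz[OF that] unfolding bab by simp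
  qed
  have fsq: "(fact (p-1))^2 = (\<Prod>j\<in>JJ. c j * (of_nat p - c j) :: rat)"
    unfolding prod.distrib c_def prod_cc prod_pcc by (simp add: power2_eq_square)
  have LHS: "(\<Prod>j\<in>JJ. a j + u) * (\<Prod>j\<in>JJ. of_nat p - a j - u) / (fact (p-1))^2 = P0 * (E1 * E2)"
  proof -
    have "(\<Prod>j\<in>JJ. a j + u) * (\<Prod>j\<in>JJ. of_nat p - a j - u) / (fact (p-1))^2
        = (\<Prod>j\<in>JJ. (a j + u) * (of_nat p - a j - u) / (c j * (of_nat p - c j)))"
      unfolding fsq prod_dividef prod.distrib ..
    also have "\<dots> = (\<Prod>j\<in>JJ. ((a j / c j) * ((of_nat p - a j) / (of_nat p - c j))) * ((1 + u / a j) * (1 + (- u) / b j)))"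
      by (rule prod.cong) (use fac in auto)
    also have "\<dots> = P0 * (E1 * E2)"
      unfolding prod.distrib P0_def E1_def E2_def prod_rho[symmetric] a_def c_def by simp
    finally show ?thesis .
  qed
  have A1M: "Mp p 1 A1" unfolding A1_def a_def using sum_a[of 1] by simp
  have A2M: "Mp p 1 (\<Sum>j\<in>JJ. 1 / (a j)^2)" unfolding a_def using sum_a[of 2] by simp
  have B1M: "Mp p 1 B1" unfolding B1_def b_def using sum_b[of 1] by simp
  have B2M: "Mp p 1 (\<Sum>j\<in>JJ. 1 / (b j)^2)" unfolding b_def using sum_b[of 2] by simp
  have AB: "Mp p 2 (A1 + B1)" unfolding A1_def B1_def a_def b_def using A1B1 .
  have E1c: "Mp p 3 (E1 - (1 + u * A1))" unfolding E1_def A1_def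
    using expand_lin[OF pr p2 JJ_fin uM, of a] Ua A1M A2M unfolding A1_def by blast
  have mu: "Mp p 1 (- u)" using Mp_uminus[OF pr uM] .
  have E2c: "Mp p 3 (E2 - (1 + (- u) * B1))" unfolding E2_def B1_def
    using expand_lin[OF pr p2 JJ_fin mu, of b] Ub B1M B2M unfolding B1_def by blast
  have P0c: "Mp p 3 (P0 - T)" unfolding P0_def T_def using P0_cong[OF pr p2 sp] .
  have RA1: "Rp p A1" using Mp_Rp[OF pr A1M] .
  have RB1: "Rp p B1" using Mp_Rp[OF pr B1M] .
  have Ru: "Rp p u" using Mp_Rp[OF pr uM] .
  have R1A: "Rp p (1 + u * A1)" using pr Ru RA1 by (simp add: Rp_add Rp_mult)
  have R1B: "Rp p (1 + (- u) * B1)" using Rp_add[OF pr Rp_1[OF pr] Rp_mult[OF pr Rp_uminus[OF pr Ru] RB1]] .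
  have RE2: "Rp p E2" using Rp_add[OF pr Mp_Rp[OF pr E2c] R1B] by simp
  have RE1: "Rp p E1" using Rp_add[OF pr Mp_Rp[OF pr E1c] R1A] by simp
  have RH: "Rp p (H s)" unfolding H_def by (rule Rp_sum[OF pr]) (use sp in \<open>auto intro!: Up_inv_Rp[OF pr] Up_nat[OF pr]\<close>)
  have T1M: "Mp p 1 (T - 1)"
  proof -
    have "T - 1 = of_nat p * (2 * H s + 2 * of_nat p * (H s)^2)" unfolding T_def by (simp add: algebra_simps power2_eq_square)
    moreover have "Rp p (2 * H s + 2 * of_nat p * (H s)^2)" using pr RH by (simp add: Rp_add Rp_mult Rp_power)
    ultimately show ?thesis using Mp_mult_R[OF pr Mp_p[OF pr]] by simp
  qed
  have RT: "Rp p T" using Rp_add[OF pr Mp_Rp[OF pr T1M] Rp_1[OF pr]] by simp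
  have uA: "Mp p 2 (u * A1)" using Mp2_sq[OF pr p2 uM A1M] .
  have uB: "Mp p 2 (u * B1)" using Mp2_sq[OF pr p2 uM B1M] .
  have m1: "Mp p 3 (E1 * E2 - (1 + u * A1) * (1 + (- u) * B1))"
  proof -
    have "E1 * E2 - (1 + u * A1) * (1 + (- u) * B1) = (E1 - (1 + u * A1)) * E2 + (1 + u * A1) * (E2 - (1 + (- u) * B1))"
      by (simp add: algebra_simps)
    thus ?thesis using Mp_add[OF pr Mp_mult_R[OF pr E1c RE2] Mp_mult_L[OF pr R1A E2c]] by simp
  qed
  have m2: "Mp p 3 ((1 + u * A1) * (1 + (- u) * B1) - (1 + 2 * (u * A1)))"
  proof -
    have e: "(1 + u * A1) * (1 + (- u) * B1) - (1 + 2 * (u * A1)) = - (u * (A1 + B1)) - (u * A1) * (u * B1)"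
      by (simp add: algebra_simps)
    have "Mp p 3 (u * (A1 + B1))" using Mp3_of_sq[OF pr p2 uM AB] .
    moreover have "Mp p (2 + 2) ((u * A1) * (u * B1))" using Mp_mult[OF pr uA uB] .
    hence "Mp p 3 ((u * A1) * (u * B1))" using Mp_mono[OF pr, of 3 4] by simp
    ultimately show ?thesis unfolding e using Mp_diff[OF pr Mp_uminus[OF pr]] by blast
  qed
  have m12: "Mp p 3 (E1 * E2 - (1 + 2 * (u * A1)))" using Mp_trans[OF m1 m2] .
  have RE12: "Rp p (E1 * E2)" using Rp_mult[OF pr RE1 RE2] .
  have e: "P0 * (E1 * E2) - (T + 2 * u * A1) = (P0 - T) * (E1 * E2) + T * (E1 * E2 - (1 + 2 * (u * A1))) + (T - 1) * (2 * (u * A1))"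
    by (simp add: algebra_simps)
  have f1: "Mp p 3 ((P0 - T) * (E1 * E2))" using Mp_mult_R[OF pr P0c RE12] .
  have f2: "Mp p 3 (T * (E1 * E2 - (1 + 2 * (u * A1))))" using Mp_mult_L[OF pr RT m12] .
  have f3: "Mp p 3 ((T - 1) * (2 * (u * A1)))"
    using Mp3_of_sq[OF pr p2 T1M Mp_mult_L[OF pr Rp_numeral[OF pr] uA]] .
  have "Mp p 3 (P0 * (E1 * E2) - (T + 2 * u * A1))" unfolding e using Mp_add[OF pr Mp_add[OF pr f1 f2] f3] .
  moreover have "A1 = H (p-1-s) - H s" unfolding A1_def a_def using A1_eq .
  ultimately show ?thesis using LHS unfolding a_def T_def by (simp add: add.assoc)
qed


lemma A_M: "Mp p 1 (H (p - 1 - s) - H s)"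
  using sum_a[of 1] A1_eq by simp

end


lemma poch_Ak: "pochhammer x k * pochhammer (1 - x) k / (pochhammer 1 k)^2 = Ak (x::rat) k"
proof -
  have "(pochhammer (1::rat) k)^2 = (\<Prod>j<k. (of_nat j + 1)^2)"
    unfolding pochhammer_prod atLeast0LessThan by (simp add: prod_power_distrib add.commute)
  thus ?thesis unfolding Ak_def prod_dividef prod.distrib pochhammer_prod atLeast0LessThan
    by (simp add: add.commute)
qed

lemma qalg: "(P::rat) \<noteq> 0 \<Longrightarrow> F \<noteq> 0 \<Longrightarrow> T \<noteq> 0 \<Longrightarrow> M - T \<noteq> 0 \<Longrightarrow> M \<noteq> 0 \<Longrightarrow>
  (P * (T / M) * A) * ((P - P * (T / M)) * B) / (P * F)^2 * M^2 / (T * (M - T)) = A * B / F^2"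
  by (simp add: field_simps power2_eq_square)

theorem theorem3p1:
  fixes p :: nat and r m :: int
  assumes "prime p" and "p > 3" and "0 < r" and "r < m" and "coprime m (int p)"
  shows "rat_cong (int p ^ 2)
           (\<Sum>k=1..p-1. pochhammer (of_int r / of_int m :: rat) k
                          * pochhammer (1 - of_int r / of_int m) k / (pochhammer 1 k)^2
                          * (1 / of_nat k))
           (Qp p r m + 1/2 * of_nat p * (Qp p r m)^2)
       \<and> rat_cong (int p)
           (\<Sum>k=1..p-1. pochhammer (of_int r / of_int m :: rat) k
                          * pochhammer (1 - of_int r / of_int m) k / (pochhammer 1 k)^2
                          * (1 / (of_nat k)^2))
           (- 1/2 * (Qp p r m)^2)"
proof -
  have pr: "prime p" and p3: "p > 3" and r0: "0 < r" and rm: "r < m" and cpm: "coprime m (int p)" using assms by auto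
  have p1: "p > 1" using prime_gt_1_nat[OF pr] .
  have m0: "m > 0" using r0 rm by simp
  have ndm: "\<not> int p dvd m"
  proof
    assume "int p dvd m"
    hence "int p dvd gcd m (int p)" by simp
    thus False using cpm p1 by simp
  qed
  define x where "x = (of_int r / of_int m :: rat)"
  obtain z0 where z0: "[m * z0 = 1] (mod int p)" using cong_solve_coprime_int[OF cpm] by blast
  define z where "z = z0 * (- r)"
  have z: "[m * z = - r] (mod int p)" unfolding z_def using cong_mult[OF z0 cong_refl[of "- r"]] by (simp add: mult.assoc)
  define s where "s = nat (z mod int p)"
  have sz: "int s = z mod int p" unfolding s_def using p1 by simp
  have "z mod int p < int p" using p1 by (intro pos_mod_bound) simp
  hence "int s < int p" using sz by simp
  hence sp: "s < p" by simp
  have "[m * (z mod int p) = m * z] (mod int p)" by (simp add: cong_def mod_mult_right_eq)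
  hence "[m * int s = m * z] (mod int p)" using sz by simp
  hence "[m * int s = - r] (mod int p)" using z by (rule cong_trans)
  hence dv: "int p dvd r + int s * m" by (simp add: cong_iff_dvd_diff algebra_simps)
  define t where "t = (r + int s * m) div int p"
  have rt: "r + int s * m = int p * t" unfolding t_def using dv by simp
  have t0: "0 < t"
  proof -
    have "0 < r + int s * m" using r0 m0 by (simp add: add_pos_nonneg)
    thus ?thesis using rt p1 by (simp add: zero_less_mult_iff)
  qed
  have tm: "t < m"
  proof -
    have "int s * m \<le> (int p - 1) * m" using sp m0 by (intro mult_right_mono) auto
    hence "int p * t < int p * m" using rt rm by (simp add: algebra_simps)
    thus ?thesis using p1 by simp
  qed
  define u where "u = x + of_nat s"
  have ux: "u = of_nat p * (of_int t / of_int m)"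
  proof -
    have "u = (of_int r + of_int (int s) * of_int m) / of_int m" unfolding u_def x_def using m0 by (simp add: field_simps)
    also have "\<dots> = of_int (int p * t) / of_int m" unfolding rt[symmetric] by simp
    finally show ?thesis by simp
  qed
  have Rtm: "Rp p (of_int t / of_int m)" unfolding Rp_def using ndm by blast
  have uM: "Mp p 1 u" unfolding Mp_def ux using Rtm by auto
  have rtq: "(of_int r :: rat) + of_nat s * of_int m = of_nat p * of_int t"
    using arg_cong[OF rt, of "of_int :: int \<Rightarrow> rat"] by simp
  have p0: "(of_nat p :: rat) \<noteq> 0" using p1 by simp
  have rq: "(of_int r::rat) = of_nat p * of_int t - of_nat s * of_int m" using rtq by (simp add: algebra_simps)
  have rr1: "rat_rep (of_int r / of_nat p) m = t"
  proof (rule rat_rep_eq[OF m0 _ tm])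
    show "0 \<le> t" using t0 by simp
    show "rat_cong m (of_int r / of_nat p) (of_int t)"
    proof (rule rat_cong_intro[of "int p" m "- (int s * m)"])
      show "int p \<noteq> 0" using p1 by simp
      show "coprime (int p) m" using cpm by (simp add: coprime_commute)
      show "m dvd - (int s * m)" by simp
      show "of_int r / of_nat p - of_int t = (of_int (- (int s * m)) / of_int (int p) :: rat)"
        using p0 unfolding rq by (simp add: field_simps)
    qed
  qed
  have rr2: "rat_rep (- of_int r / of_nat p) m = m - t"
  proof (rule rat_rep_eq[OF m0])
    show "0 \<le> m - t" "m - t < m" using t0 tm by auto
    show "rat_cong m (- of_int r / of_nat p) (of_int (m - t))"
    proof (rule rat_cong_intro[of "int p" m "m * (int s - int p)"])
      show "int p \<noteq> 0" using p1 by simp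
      show "coprime (int p) m" using cpm by (simp add: coprime_commute)
      show "m dvd m * (int s - int p)" by simp
      show "- of_int r / of_nat p - of_int (m - t) = (of_int (m * (int s - int p)) / of_int (int p) :: rat)"
        using p0 unfolding rq by (simp add: field_simps)
    qed
  qed
  define PP where "PP = (\<Prod>j\<in>JJ p s. of_int (int j - int s) + u) * (\<Prod>j\<in>JJ p s. of_nat p - of_int (int j - int s) - u) / (fact (p-1))^2"
  have poch1: "pochhammer x p = u * (\<Prod>j\<in>JJ p s. of_int (int j - int s) + u)"
  proof -
    have "pochhammer x p = (\<Prod>j\<in>{0..<p}. x + of_nat j)" by (simp add: pochhammer_prod)
    also have "\<dots> = (x + of_nat s) * (\<Prod>j\<in>{0..<p} - {s}. x + of_nat j)" by (rule prod.remove) (use sp in auto)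
    also have "(\<Prod>j\<in>{0..<p} - {s}. x + of_nat j) = (\<Prod>j\<in>JJ p s. of_int (int j - int s) + u)"
      by (rule prod.cong) (simp_all add: u_def)
    finally show ?thesis unfolding u_def .
  qed
  have poch2: "pochhammer (1 - x) p = (of_nat p - u) * (\<Prod>j\<in>JJ p s. of_nat p - of_int (int j - int s) - u)"
  proof -
    have "pochhammer (1 - x) p = (\<Prod>j\<in>{0..<p}. 1 - x + of_nat j)" by (simp add: pochhammer_prod)
    also have "\<dots> = (1 - x + of_nat (p - 1 - s)) * (\<Prod>j\<in>{0..<p} - {p - 1 - s}. 1 - x + of_nat j)"
      by (rule prod.remove) (use sp in auto)
    also have "(\<Prod>j\<in>{0..<p} - {p - 1 - s}. 1 - x + of_nat j) = (\<Prod>j\<in>JJ p s. of_nat p - of_int (int j - int s) - u)"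
      by (rule prod.reindex_bij_witness[of _ "\<lambda>j. p - 1 - j" "\<lambda>j. p - 1 - j"]) (use sp in \<open>auto simp: u_def of_nat_diff\<close>)
    also have "1 - x + of_nat (p - 1 - s) = of_nat p - u" using sp by (simp add: u_def of_nat_diff)
    finally show ?thesis .
  qed
  have poch3: "pochhammer (1::rat) p = of_nat p * fact (p - 1)"
    using fact_reduce[of p] p1 by (simp add: pochhammer_fact[symmetric])
  have t0': "(of_int t :: rat) \<noteq> 0" using t0 by simp
  have mt0: "(of_int m - of_int t :: rat) \<noteq> 0" using tm by simp
  have m0': "(of_int m :: rat) \<noteq> 0" using m0 by simp
  have f0: "(fact (p - 1) :: rat) \<noteq> 0" by simp
  have QP: "Qp p r m = 1 / of_nat p * (1 - PP)"
  proof -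
    have "pochhammer x p * pochhammer (1 - x) p / (pochhammer 1 p)^2 * (of_int m)^2 / (of_int t * of_int (m - t)) = PP"
      unfolding poch1 poch2 poch3 PP_def ux using qalg[OF p0 f0 t0' mt0 m0'] by simp
    thus ?thesis unfolding Qp_def Let_def x_def[symmetric] rr1 rr2 by simp
  qed
  define HH where "HH = H s"
  define A where "A = H (p - 1 - s) - H s"
  define QQ where "QQ = Qp p r m"
  have p2: "p \<noteq> 2" using p3 by simp
  have uM': "Mp p 1 (x + of_nat s)" using uM unfolding u_def .
  have RH: "Rp p HH" unfolding HH_def H_def by (rule Rp_sum[OF pr]) (use sp in \<open>auto intro!: Up_inv_Rp[OF pr] Up_nat[OF pr]\<close>)
  have AM: "Mp p 1 A" unfolding A_def using A_M[OF pr p3 sp] .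
  have uA: "Mp p 2 (u * A)" using Mp2_sq[OF pr p2 uM AM] .
  have uAp: "Mp p 1 (u * A / of_nat p)" using Mp_divp[OF pr, of 1] uA by (simp add: numeral_2_eq_2)
  have Pc: "Mp p 3 (PP - (1 + 2 * of_nat p * HH + 2 * (of_nat p)^2 * HH^2 + 2 * u * A))"
    unfolding PP_def HH_def A_def using Pcong[OF pr p3 sp uM] .
  define q1 where "q1 = - 2 * HH - 2 * of_nat p * HH^2 - 2 * (u * A / of_nat p)"
  have Qq1: "Mp p 2 (QQ - q1)"
  proof -
    have "QQ - q1 = - ((PP - (1 + 2 * of_nat p * HH + 2 * (of_nat p)^2 * HH^2 + 2 * u * A)) / of_nat p)"
      unfolding QQ_def QP q1_def using p0 by (simp add: field_simps power2_eq_square)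
    moreover have "Mp p 2 ((PP - (1 + 2 * of_nat p * HH + 2 * (of_nat p)^2 * HH^2 + 2 * u * A)) / of_nat p)"
      using Mp_divp[OF pr, of 2] Pc by (simp add: numeral_3_eq_3 numeral_2_eq_2)
    ultimately show ?thesis using Mp_uminus[OF pr] by simp
  qed
  have RQ: "Rp p QQ"
  proof -
    have "Rp p q1" unfolding q1_def 
      by (intro Rp_diff[OF pr] Rp_mult[OF pr] Rp_uminus[OF pr] Rp_power[OF pr] Rp_numeral[OF pr] Rp_of_nat[OF pr])
         (use RH Mp_Rp[OF pr uAp] in auto)
    thus ?thesis using Rp_add[OF pr Mp_Rp[OF pr Qq1]] by fastforce
  qed
  have Q2H: "Mp p 1 (QQ + 2 * HH)"
  proof -
    have "QQ + 2 * HH = (QQ - q1) + (- (of_nat p * (2 * HH^2)) - 2 * (u * A / of_nat p))" unfolding q1_def by simp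
    moreover have "Mp p 1 (QQ - q1)" using Mp_mono[OF pr _ Qq1] by simp
    moreover have "Mp p 1 (of_nat p * (2 * HH^2))" using Mp_mult_R[OF pr Mp_p[OF pr]] pr RH by (simp add: Rp_mult Rp_power)
    ultimately show ?thesis using Mp_add[OF pr] Mp_diff[OF pr] Mp_uminus[OF pr] Mp_mult_L[OF pr Rp_numeral[OF pr] uAp] by metis
  qed
  have QS: "Mp p 1 (QQ^2 - 4 * HH^2)"
  proof -
    have "QQ^2 - 4 * HH^2 = (QQ + 2 * HH) * (QQ - 2 * HH)" by (simp add: algebra_simps power2_eq_square)
    moreover have "Rp p (QQ - 2 * HH)" using pr RQ RH by (simp add: Rp_diff Rp_mult)
    ultimately show ?thesis using Mp_mult_R[OF pr Q2H] by simp
  qed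
  have half: "Rp p (1/2)" using Rp_half[OF pr p2] .
  have QT: "Mp p 2 ((QQ + 1/2 * of_nat p * QQ^2) - (- 2 * HH - 2 * (u * A / of_nat p)))"
  proof -
    have e: "(QQ + 1/2 * of_nat p * QQ^2) - (- 2 * HH - 2 * (u * A / of_nat p)) = (QQ - q1) + (of_nat p * (QQ^2 - 4 * HH^2)) * (1/2)"
      unfolding q1_def by (simp add: algebra_simps power2_eq_square)
    have "Mp p (Suc 1) (of_nat p * (QQ^2 - 4 * HH^2))" using Mp_multp[OF pr QS] .
    hence "Mp p 2 ((of_nat p * (QQ^2 - 4 * HH^2)) * (1/2))" using Mp_mult_R[OF pr _ half] by (simp add: numeral_2_eq_2)
    thus ?thesis unfolding e using Mp_add[OF pr Qq1] by blast
  qed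
  have sum1: "(\<Sum>k=1..p-1. pochhammer (of_int r / of_int m :: rat) k * pochhammer (1 - of_int r / of_int m) k / (pochhammer 1 k)^2 * (1 / of_nat k))
     = (\<Sum>k=1..p-1. Ak x k / of_nat k)"
    unfolding x_def[symmetric] by (rule sum.cong) (simp_all add: poch_Ak)
  have sum2: "(\<Sum>k=1..p-1. pochhammer (of_int r / of_int m :: rat) k * pochhammer (1 - of_int r / of_int m) k / (pochhammer 1 k)^2 * (1 / (of_nat k)^2))
     = (\<Sum>k=1..p-1. Ak x k / (of_nat k)^2)"
    unfolding x_def[symmetric] by (rule sum.cong) (simp_all add: poch_Ak)
  have S1T: "Mp p 2 ((\<Sum>k=1..p-1. Ak x k / of_nat k) - (- 2 * HH - 2 * (u * A / of_nat p)))"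
  proof (cases "2 * s + 1 = p")
    case True
    hence "p - 1 - s = s" by simp
    hence A0: "A = 0" unfolding A_def by simp
    show ?thesis using S1_cong_mid[OF pr sp uM' True] unfolding A0 HH_def by simp
  next
    case False
    define s' where "s' = p - 1 - s"
    define hh where "hh = (of_nat s - of_nat s') * (of_nat s + of_nat s' + 1 :: rat)"
    define D where "D = (of_nat s - of_nat s' :: rat)"
    have ss: "s + s' + 1 = p" unfolding s'_def using sp by simp
    have hh': "hh = D * of_nat p" unfolding hh_def D_def ss[symmetric] by simp
    have m1: "Mp p 2 ((\<Sum>k=1..p-1. Ak x k / of_nat k) - (- 2 * HH + dl s x * (- 2 * H s' + 2 * HH) / hh))"
      using S1_cong[OF pr sp uM' False] unfolding HH_def s'_def hh_def .
    have dlu: "dl s x = u * (1 + 2 * of_nat s - u)" unfolding dl_def[OF pr sp uM'] u_def by (simp add: algebra_simps)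
    have ndD: "\<not> int p dvd (int s - int s')"
    proof
      assume "int p dvd (int s - int s')"
      then obtain q where q: "int s - int s' = int p * q" by auto
      have "q = 0"
      proof (rule ccontr)
        assume "q \<noteq> 0"
        hence "1 \<le> \<bar>q\<bar>" by linarith
        hence "int p * 1 \<le> int p * \<bar>q\<bar>" by (intro mult_left_mono) auto
        hence "\<bar>int p * q\<bar> \<ge> int p" by (simp add: abs_mult)
        thus False using q ss by auto
      qed
      thus False using q ss False by simp
    qed
    have UD: "Up p D" unfolding D_def using Up_of_int[OF pr ndD] by simp
    have D0: "D \<noteq> 0" using Up_nz[OF pr UD] .
    have e: "(- 2 * HH + dl s x * (- 2 * H s' + 2 * HH) / hh) - (- 2 * HH - 2 * (u * A / of_nat p))
       = (2 * ((A * (u * (u - of_nat p))) / of_nat p)) * (1 / D)"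
    proof -
      have h1: "- 2 * H s' + 2 * HH = - 2 * A" unfolding A_def HH_def s'_def by simp
      have h2: "1 + 2 * of_nat s - u = D + of_nat p - u" unfolding D_def using ss[symmetric] by simp
      show ?thesis unfolding dlu h2 h1 hh' using p0 D0 by (simp add: field_simps power2_eq_square)
    qed
    have "Mp p 3 (A * (u * (u - of_nat p)))" using Mp3_of_sq[OF pr p2 AM Mp2_sq[OF pr p2 uM Mp_diff[OF pr uM Mp_p[OF pr]]]] .
    hence "Mp p 2 ((A * (u * (u - of_nat p))) / of_nat p)" using Mp_divp[OF pr, of 2] by (simp add: numeral_3_eq_3 numeral_2_eq_2)
    hence "Mp p 2 ((2 * ((A * (u * (u - of_nat p))) / of_nat p)) * (1 / D))"
      using Mp_mult_R[OF pr Mp_mult_L[OF pr Rp_numeral[OF pr]] Up_inv_Rp[OF pr UD]] by blast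
    hence m2: "Mp p 2 ((- 2 * HH + dl s x * (- 2 * H s' + 2 * HH) / hh) - (- 2 * HH - 2 * (u * A / of_nat p)))" unfolding e .
    show ?thesis using Mp_trans[OF pr p3 sp m1 m2] .
  qed
  have G1: "Mp p 2 ((\<Sum>k=1..p-1. Ak x k / of_nat k) - (QQ + 1/2 * of_nat p * QQ^2))"
  proof -
    have "Mp p 2 ((- 2 * HH - 2 * (u * A / of_nat p)) - (QQ + 1/2 * of_nat p * QQ^2))"
      using Mp_uminus[OF pr QT] by simp
    thus ?thesis using Mp_trans[OF pr p3 sp S1T] by blast
  qed
  have G2: "Mp p 1 ((\<Sum>k=1..p-1. Ak x k / (of_nat k)^2) - (- 1/2 * QQ^2))"
  proof -
    have e: "(\<Sum>k=1..p-1. Ak x k / (of_nat k)^2) - (- 1/2 * QQ^2) = 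
       ((\<Sum>k=1..p-1. Ak x k / (of_nat k)^2) + 2 * HH^2) + (QQ^2 - 4 * HH^2) * (1/2)"
      by (simp add: algebra_simps)
    show ?thesis unfolding e using Mp_add[OF pr S2_cong[OF pr sp uM'] Mp_mult_R[OF pr QS half]] unfolding HH_def .
  qed
  show ?thesis unfolding sum1 sum2 QQ_def[symmetric]
    using rat_cong_from_Mp[OF pr G1] rat_cong_from_Mp[OF pr G2] by simp
qed



end
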